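(* Let $(\Omega,\mathbb B(\Omega),\mu,T)$ be a measure-preserving dynamical system and $\mathbf X$ an $\mathbb R^N$-valued random vector on $(\Omega,\mathbb B(\Omega))$ such that $h_\mu(T)=\lim_{d\to\infty}h_\mu(T,\mathcal P^{\mathbf X}(d))$. Then: (i) If there is $d_0\in\mathbb N$ such that $\mathcal P^{\mathbf X}(d)$ has the Markov property for all $d\ge d_0$, then $h_\mu(T)=\lim_{d\to\infty}h^{\mathbf X}_{\mu,\mathrm{cond}}(T,d)$. (ii) If for some $d\in\mathbb N$ the partition $\mathcal P^{\mathbf X}(d)$ is generating and has the Markov property, then $h_\mu(T)=h^{\mathbf X}_{\mu,\mathrm{cond}}(T,d)$.
   Context: A measure-preserving dynamical system $(\Omega,\mathbb B(\Omega),\mu,T)$ consists of a nonempty topological space $\Omega$ with Borel $\sigma$-algebra $\mathbb B(\Omega)$, a probability measure $\mu$, and a measurable map $T:\Omega\to\Omega$ with $\mu(T^{-1}B)=\mu(B)$ for all $B\in\mathbb B(\Omega)$. For a finite partition $\mathcal P=\{P_0,\dots,P_l\}\subset\mathbb B(\Omega)$ of $\Omega$: $H(\mathcal P)=-\sum_{P\in\mathcal P}\mu(P)\ln\mu(P)$ (with $0\ln0=0$); $\mathcal P_n$ is the partition consisting of the sets $P_{a_0}\cap T^{-1}(P_{a_1})\cap\dots\cap T^{-(n-1)}(P_{a_{n-1}})$, $a_i\in\{0,\dots,l\}$; $h_\mu(T,\mathcal P)=\lim_{n\to\infty}(H(\mathcal P_{n+1})-H(\mathcal P_n))$; the Kolmogorov–Sinai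 entropy is $h_\mu(T)=\sup_{\mathcal P}h_\mu(T,\mathcal P)$ over finite partitions. A finite partition $\mathcal G=\{G_0,\dots,G_l\}\subset\mathbb B(\Omega)$ is generating if, with $\mathbb A$ the $\sigma$-algebra generated by all $T^{-n}(G_i)$, $n\in\mathbb N_0$, for every $B\in\mathbb B(\Omega)$ there is $A\in\mathbb A$ with $\mu(A\triangle B)=0$. A finite partition $\mathcal M=\{M_0,\dots,M_l\}\subset\mathbb B(\Omega)$ has the Markov property (w.r.t. $T,\mu$) if for all $n\in\mathbb N$ and $i_0,\dots,i_n\in\{0,\dots,l\}$ with $\mu(M_{i_0}\cap T^{-1}M_{i_1}\cap\dots\cap T^{-(n-1)}M_{i_{n-1}})>0$, $$\frac{\mu(M_{i_0}\cap T^{-1}M_{i_1}\cap\dots\cap T^{-n}M_{i_n})}{\mu(M_{i_0}\cap T^{-1}M_{i_1}\cap\dots\cap T^{-(n-1)}M_{i_{n-1}})}=\frac{\mu(M_{i_{n-1}}\cap T^{-1}M_{i_n})}{\mu(M_{i_{n-1}})}.$$ Let $\Pi_d$ be the set of permutations of $\{0,1,\dots,d\}$. A vector $(x_0,\dots,x_d)\in\mathbb R^{d+1}$ has ordinal pattern $\pi=(r_0,\dots,r_d)\in\Pi_d$ if $x_{r_0}\ge x_{r_1}\ge\dots\ge x_{r_d}$ and $r_{l-1}>r_l$ whenever $x_{r_{l-1}}=x_{r_l}$. For a random vector $\mathbf X=(X_1,\dots,X_N)$ and $d\in\mathbb N$, the ordinal partition $\mathcal P^{\mathbf X}(d)$ consists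 of the sets $P_{(\pi_1,\dots,\pi_N)}=\{\omega: (X_i(T^{d}\omega),X_i(T^{d-1}\omega),\dots,X_i(T\omega),X_i(\omega))\text{ has ordinal pattern }\pi_i\text{ for } i=1,\dots,N\}$, $\pi_i\in\Pi_d$. Conditional entropy of ordinal patterns: $h^{\mathbf X}_{\mu,\mathrm{cond}}(T,d)=H(\mathcal P^{\mathbf X}(d)_2)-H(\mathcal P^{\mathbf X}(d))$. *)

theory Defs
  imports "HOL-Probability.Probability"
begin

definition mpds :: "'a::topological_space measure \<Rightarrow> ('a \<Rightarrow> 'a) \<Rightarrow> bool" where
  "mpds M T \<longleftrightarrow> prob_space M \<and> sets M = sets (borel :: 'a measure) \<and> T \<in> measurable M M \<and>
     (\<forall>B \<in> sets M. measure M (T -` B \<inter> space M) = measure M B)"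

definition finite_partition :: "'a measure \<Rightarrow> 'a set set \<Rightarrow> bool" where
  "finite_partition M P \<longleftrightarrow> finite P \<and> P \<subseteq> sets M \<and> \<Union>P = space M \<and>
     (\<forall>A\<in>P. \<forall>B\<in>P. A \<noteq> B \<longrightarrow> A \<inter> B = {})"

definition part_entropy :: "'a measure \<Rightarrow> 'a set set \<Rightarrow> real" where
  "part_entropy M P = - (\<Sum>A\<in>P. measure M A * ln (measure M A))"

definition refine :: "'a measure \<Rightarrow> ('a \<Rightarrow> 'a) \<Rightarrow> 'a set set \<Rightarrow> nat \<Rightarrow> 'a set set" where
  "refine M T P n = {space M \<inter> (\<Inter>k<n. (T ^^ k) -` (a k)) | a. \<forall>k<n. a k \<in> P}"

definition part_KS :: "'a measure \<Rightarrow> ('a \<Rightarrow> 'a) \<Rightarrow> 'a set set \<Rightarrow> real" where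
  "part_KS M T P = lim (\<lambda>n. part_entropy M (refine M T P (Suc n)) - part_entropy M (refine M T P n))"

definition KS_entropy :: "'a measure \<Rightarrow> ('a \<Rightarrow> 'a) \<Rightarrow> ereal" where
  "KS_entropy M T = (SUP P \<in> {P. finite_partition M P}. ereal (part_KS M T P))"

definition generating :: "'a measure \<Rightarrow> ('a \<Rightarrow> 'a) \<Rightarrow> 'a set set \<Rightarrow> bool" where
  "generating M T G \<longleftrightarrow>
     (\<forall>B \<in> sets M. \<exists>A \<in> sigma_sets (space M) {(T ^^ n) -` C \<inter> space M | n C. C \<in> G}.
        measure M (A - B \<union> (B - A)) = 0)"

definition markov_prop :: "'a measure \<Rightarrow> ('a \<Rightarrow> 'a) \<Rightarrow> 'a set set \<Rightarrow> bool" where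
  "markov_prop M T P \<longleftrightarrow>
     (\<forall>n::nat \<ge> 1. \<forall>a. (\<forall>k\<le>n. a k \<in> P) \<longrightarrow>
        measure M (space M \<inter> (\<Inter>k<n. (T ^^ k) -` (a k))) > 0 \<longrightarrow>
        measure M (space M \<inter> (\<Inter>k\<le>n. (T ^^ k) -` (a k)))
          / measure M (space M \<inter> (\<Inter>k<n. (T ^^ k) -` (a k)))
        = measure M (a (n - 1) \<inter> T -` (a n) \<inter> space M) / measure M (a (n - 1)))"

definition ord_patterns :: "nat \<Rightarrow> nat list set" where
  "ord_patterns d = {r. distinct r \<and> set r = {0..d}}"

definition has_pattern :: "(nat \<Rightarrow> real) \<Rightarrow> nat \<Rightarrow> nat list \<Rightarrow> bool" where
  "has_pattern x d r \<longleftrightarrow> r \<in> ord_patterns d \<and>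
     (\<forall>l\<in>{1..d}. x (r ! (l - 1)) \<ge> x (r ! l) \<and>
        (x (r ! (l - 1)) = x (r ! l) \<longrightarrow> r ! (l - 1) > r ! l))"

text \<open>Ordinal partition P^X(d): the vector (X_i(T^d w), ..., X_i(T w), X_i(w)) has j-th entry
  X_i(T^(d-j) w).\<close>
definition ordinal_partition ::
  "'a measure \<Rightarrow> ('a \<Rightarrow> 'a) \<Rightarrow> ('a \<Rightarrow> real ^ 'n) \<Rightarrow> nat \<Rightarrow> 'a set set" where
  "ordinal_partition M T X d =
     {{w \<in> space M. \<forall>i. has_pattern (\<lambda>j. X ((T ^^ (d - j)) w) $ i) d (\<pi> i)} | \<pi>.
        \<forall>i. \<pi> i \<in> ord_patterns d}"

definition cond_entropy_ord ::
  "'a measure \<Rightarrow> ('a \<Rightarrow> 'a) \<Rightarrow> ('a \<Rightarrow> real ^ 'n) \<Rightarrow> nat \<Rightarrow> real" where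
  "cond_entropy_ord M T X d =
     part_entropy M (refine M T (ordinal_partition M T X d) 2) - part_entropy M (ordinal_partition M T X d)"

end

theory Submission
  imports Defs "HOL-Library.List_Lexorder"
begin

definition eta :: "real \<Rightarrow> real" where "eta x = x * ln x"

lemma eta_0[simp]: "eta 0 = 0" and eta_1[simp]: "eta 1 = 0" by (auto simp: eta_def)

context prob_space
begin

definition dp :: "('a \<Rightarrow> 'b) \<Rightarrow> 'b \<Rightarrow> real" where
  "dp f y = prob (f -` {y} \<inter> space M)"

definition ent :: "('a \<Rightarrow> 'b) \<Rightarrow> real" where
  "ent f = - (\<Sum>y\<in>f ` space M. eta (dp f y))"

lemma dp_nonneg: "0 \<le> dp f y" by (simp add: dp_def)
lemma dp_le1: "dp f y \<le> 1" by (simp add: dp_def)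

lemma dp_notin: "y \<notin> f ` space M \<Longrightarrow> dp f y = 0"
  unfolding dp_def by (subgoal_tac "f -` {y} \<inter> space M = {}") auto

lemma ent_superset:
  assumes "finite S" "f ` space M \<subseteq> S"
  shows "ent f = - (\<Sum>y\<in>S. eta (dp f y))"
  unfolding ent_def
  by (rule arg_cong[where f=uminus], rule sum.mono_neutral_left) (auto simp: assms dp_notin)

lemma dp_fiber_sum:
  assumes g: "simple_function M g" and fg: "\<And>w. w \<in> space M \<Longrightarrow> f w = \<phi> (g w)"
  shows "dp f x = (\<Sum>y\<in>{y\<in>g ` space M. \<phi> y = x}. dp g y)"
proof -
  have "f -` {x} \<inter> space M = (\<Union>y\<in>{y\<in>g ` space M. \<phi> y = x}. g -` {y} \<inter> space M)"
    using fg by auto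
  then have "dp f x = measure M (\<Union>y\<in>{y\<in>g ` space M. \<phi> y = x}. g -` {y} \<inter> space M)"
    by (simp add: dp_def)
  also have "\<dots> = (\<Sum>y\<in>{y\<in>g ` space M. \<phi> y = x}. measure M (g -` {y} \<inter> space M))"
    using g by (intro measure_finite_Union) (auto simp: simple_function_def disjoint_family_on_def)
  finally show ?thesis by (simp add: dp_def)
qed

lemma sum_dp: assumes g: "simple_function M g" shows "(\<Sum>y\<in>g ` space M. dp g y) = 1"
proof -
  have "dp (\<lambda>w. ()) () = (\<Sum>y\<in>{y\<in>g ` space M. (\<lambda>_. ()) y = ()}. dp g y)"
    by (rule dp_fiber_sum[OF g]) auto
  moreover have "dp (\<lambda>w. ()) () = 1" by (simp add: dp_def prob_space)
  ultimately show ?thesis by simp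
qed

lemma pushforward:
  assumes g: "simple_function M g" and fg: "\<And>w. w \<in> space M \<Longrightarrow> f w = \<phi> (g w)"
  shows "(\<Sum>y\<in>g ` space M. dp g y * c (\<phi> y)) = (\<Sum>x\<in>f ` space M. dp f x * c x)"
proof -
  have fin: "finite (g ` space M)" using g by (simp add: simple_function_def)
  have img: "\<phi> ` g ` space M = f ` space M" using fg by (auto simp: image_iff)
  have "(\<Sum>y\<in>g ` space M. dp g y * c (\<phi> y)) =
     (\<Sum>x\<in>\<phi> ` g ` space M. \<Sum>y\<in>{y. y \<in> g ` space M \<and> \<phi> y = x}. dp g y * c (\<phi> y))"
    by (rule sum.image_gen[OF fin])
  also have "\<dots> = (\<Sum>x\<in>f ` space M. dp f x * c x)"
    unfolding img
  proof (rule sum.cong[OF refl])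
    fix x assume "x \<in> f ` space M"
    have "(\<Sum>y\<in>{y. y \<in> g ` space M \<and> \<phi> y = x}. dp g y * c (\<phi> y))
        = (\<Sum>y\<in>{y. y \<in> g ` space M \<and> \<phi> y = x}. dp g y) * c x"
      by (simp add: sum_distrib_right)
    also have "\<dots> = dp f x * c x" using dp_fiber_sum[of g f \<phi> x, OF g fg] by simp
    finally show "(\<Sum>y\<in>{y. y \<in> g ` space M \<and> \<phi> y = x}. dp g y * c (\<phi> y)) = dp f x * c x" .
  qed
  finally show ?thesis .
qed

lemma ent_alt: "ent f = - (\<Sum>y\<in>f ` space M. dp f y * ln (dp f y))"
  by (simp add: ent_def eta_def)

lemma dp_le_dp:
  assumes fg: "\<And>w. w \<in> space M \<Longrightarrow> f w = \<phi> (g w)" and g: "simple_function M g" and "y \<in> g ` space M"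
  shows "dp g y \<le> dp f (\<phi> y)"
proof -
  have fin: "finite (g ` space M)" using g by (simp add: simple_function_def)
  have "dp g y \<le> (\<Sum>y'\<in>{y'\<in>g ` space M. \<phi> y' = \<phi> y}. dp g y')"
    using assms(3) fin by (intro member_le_sum) (auto simp: dp_nonneg)
  then show ?thesis using dp_fiber_sum[of g f \<phi> "\<phi> y", OF g fg] by simp
qed

lemma ent_mono:
  assumes g: "simple_function M g" and fg: "\<And>w. w \<in> space M \<Longrightarrow> f w = \<phi> (g w)"
  shows "ent f \<le> ent g"
proof -
  have "ent f = - (\<Sum>y\<in>g ` space M. dp g y * ln (dp f (\<phi> y)))"
    unfolding ent_alt using pushforward[of g f \<phi> "\<lambda>x. ln (dp f x)", OF g fg] by simp
  also have "\<dots> \<le> - (\<Sum>y\<in>g ` space M. dp g y * ln (dp g y))"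
  proof -
    have "(\<Sum>y\<in>g ` space M. dp g y * ln (dp g y)) \<le> (\<Sum>y\<in>g ` space M. dp g y * ln (dp f (\<phi> y)))"
    proof (rule sum_mono)
      fix y assume y: "y \<in> g ` space M"
      have le: "dp g y \<le> dp f (\<phi> y)" by (rule dp_le_dp[of f \<phi> g, OF fg g y])
      show "dp g y * ln (dp g y) \<le> dp g y * ln (dp f (\<phi> y))"
      proof (cases "dp g y = 0")
        case False
        then have "0 < dp g y" using dp_nonneg[of g y] by simp
        then show ?thesis using le by (intro mult_left_mono) auto
      qed simp
    qed
    then show ?thesis by simp
  qed
  also have "\<dots> = ent g" by (simp add: ent_alt)
  finally show ?thesis .
qed

lemma ent_eq:
  assumes f: "simple_function M f" and g: "simple_function M g"
    and fg: "\<And>w. w \<in> space M \<Longrightarrow> f w = \<phi> (g w)" and gf: "\<And>w. w \<in> space M \<Longrightarrow> g w = \<psi> (f w)"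
  shows "ent f = ent g"
  using ent_mono[of g f \<phi>, OF g fg] ent_mono[of f g \<psi>, OF f gf] by simp

lemma ent_const: "ent (\<lambda>w. c) = 0"
proof -
  have "space M \<noteq> {}" by (rule not_empty)
  then have "(\<lambda>w. c) ` space M = {c}" by auto
  moreover have "dp (\<lambda>w. c) c = 1" by (simp add: dp_def prob_space)
  ultimately show ?thesis by (simp add: ent_def)
qed

lemma ent_nonneg: "ent f \<ge> 0"
proof -
  have "eta (dp f y) \<le> 0" for y
    using dp_nonneg[of f y] dp_le1[of f y] unfolding eta_def
    by (cases "dp f y = 0") (auto intro!: mult_nonneg_nonpos)
  then show ?thesis unfolding ent_def by (simp add: sum_nonpos)
qed

end

context prob_space
begin

lemma marginal:
  assumes f: "simple_function M f" and h: "simple_function M h"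
  shows "(\<Sum>x\<in>f ` space M. dp (\<lambda>w. (f w, h w)) (x, z)) = dp h z"
proof -
  have fh: "simple_function M (\<lambda>w. (f w, h w))" using f h by (rule simple_function_Pair)
  have finF: "finite (f ` space M)" using f by (simp add: simple_function_def)
  have "(\<Sum>x\<in>f ` space M. dp (\<lambda>w. (f w, h w)) (x, z)) = (\<Sum>p\<in>(\<lambda>x. (x, z)) ` f ` space M. dp (\<lambda>w. (f w, h w)) p)"
    by (subst sum.reindex) (auto simp: inj_on_def)
  also have "\<dots> = (\<Sum>p\<in>{p\<in>(\<lambda>w. (f w, h w)) ` space M. snd p = z}. dp (\<lambda>w. (f w, h w)) p)"
    apply (rule sum.mono_neutral_right)
    apply (auto simp: finF)
    apply (rule ccontr)
    apply (drule dp_notin)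
    apply simp
    done
  also have "\<dots> = dp h z"
    by (rule dp_fiber_sum[of "\<lambda>w. (f w, h w)" h snd, symmetric, OF fh]) simp
  finally show ?thesis .
qed

lemma ssa:
  fixes f :: "'a \<Rightarrow> 'b" and g :: "'a \<Rightarrow> 'c" and h :: "'a \<Rightarrow> 'd"
  assumes f: "simple_function M f" and g: "simple_function M g" and h: "simple_function M h"
  shows "ent (\<lambda>w. (f w, g w, h w)) + ent h \<le> ent (\<lambda>w. (f w, h w)) + ent (\<lambda>w. (g w, h w))"
proof -
  define X where "X = (\<lambda>w. (f w, g w, h w))"
  define fh where "fh = (\<lambda>w. (f w, h w))"
  define gh where "gh = (\<lambda>w. (g w, h w))"
  have X: "simple_function M X" unfolding X_def using f g h by (intro simple_function_Pair)
  have sfh: "simple_function M fh" unfolding fh_def using f h by (intro simple_function_Pair)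
  have sgh: "simple_function M gh" unfolding gh_def using g h by (intro simple_function_Pair)
  define R where "R = X ` space M"
  have finR: "finite R" using X by (simp add: simple_function_def R_def)
  define A where "A t = dp fh (fst t, snd (snd t))" for t :: "'b \<times> 'c \<times> 'd"
  define B where "B t = dp gh (snd t)" for t :: "'b \<times> 'c \<times> 'd"
  define C where "C t = dp h (snd (snd t))" for t :: "'b \<times> 'c \<times> 'd"
  define r where "r t = dp X t" for t :: "'b \<times> 'c \<times> 'd"
  have XA: "fh w = (\<lambda>t. (fst t, snd (snd t))) (X w)" for w by (simp add: X_def fh_def)
  have XB: "gh w = snd (X w)" for w by (simp add: X_def gh_def)
  have XC: "h w = snd (snd (X w))" for w by (simp add: X_def)
  have sA: "(\<Sum>t\<in>R. r t * ln (A t)) = - ent fh"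
    using pushforward[of X fh "\<lambda>t. (fst t, snd (snd t))" "\<lambda>x. ln (dp fh x)", OF X XA]
    by (simp add: ent_alt R_def r_def A_def)
  have sB: "(\<Sum>t\<in>R. r t * ln (B t)) = - ent gh"
    using pushforward[of X gh "snd" "\<lambda>x. ln (dp gh x)", OF X XB]
    by (simp add: ent_alt R_def r_def B_def)
  have sC: "(\<Sum>t\<in>R. r t * ln (C t)) = - ent h"
    using pushforward[of X h "\<lambda>t. snd (snd t)" "\<lambda>x. ln (dp h x)", OF X XC]
    by (simp add: ent_alt R_def r_def C_def)
  have sr: "(\<Sum>t\<in>R. r t * ln (r t)) = - ent X"
    by (simp add: ent_alt R_def r_def)
  have s1: "(\<Sum>t\<in>R. r t) = 1" using sum_dp[OF X] by (simp add: R_def r_def)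
  have trm: "r t * ln (A t) + r t * ln (B t) - r t * ln (C t) - r t * ln (r t) \<le> A t * B t / C t - r t"
    if t: "t \<in> R" for t
  proof -
    have rA: "r t \<le> A t" unfolding r_def A_def
      using dp_le_dp[of fh "\<lambda>t. (fst t, snd (snd t))" X, OF XA X] t by (simp add: R_def)
    have rB: "r t \<le> B t" unfolding r_def B_def
      using dp_le_dp[of gh snd X, OF XB X] t by (simp add: R_def)
    have rC: "r t \<le> C t" unfolding r_def C_def
      using dp_le_dp[of h "\<lambda>t. snd (snd t)" X, OF XC X] t by (simp add: R_def)
    have r0: "0 \<le> r t" by (simp add: r_def dp_nonneg)
    have A0: "0 \<le> A t" "0 \<le> B t" "0 \<le> C t" by (simp_all add: A_def B_def C_def dp_nonneg)
    show ?thesis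
    proof (cases "r t = 0")
      case True
      then show ?thesis using A0 by simp
    next
      case False
      then have rp: "0 < r t" using r0 by simp
      then have pos: "0 < A t" "0 < B t" "0 < C t" using rA rB rC by auto
      have u: "0 < A t * B t / (C t * r t)" using pos rp by simp
      have "ln (A t * B t / (C t * r t)) = ln (A t) + ln (B t) - ln (C t) - ln (r t)"
        using pos rp by (simp add: ln_mult ln_div)
      moreover have "ln (A t * B t / (C t * r t)) \<le> A t * B t / (C t * r t) - 1"
        using u by (rule ln_le_minus_one)
      ultimately have "r t * (ln (A t) + ln (B t) - ln (C t) - ln (r t)) \<le> r t * (A t * B t / (C t * r t) - 1)"
        using rp by (intro mult_left_mono) auto
      also have "\<dots> = A t * B t / C t - r t" using rp by (simp add: field_simps)
      finally show ?thesis by (simp add: algebra_simps)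
    qed
  qed
  define F where "F = f ` space M"
  define G where "G = g ` space M"
  define H where "H = h ` space M"
  have finF: "finite F" "finite G" "finite H" using f g h by (simp_all add: simple_function_def F_def G_def H_def)
  have RFGH: "R \<subseteq> F \<times> G \<times> H" by (auto simp: R_def X_def F_def G_def H_def)
  have Anon: "0 \<le> A t * B t / C t" for t by (simp add: A_def B_def C_def dp_nonneg)
  have "(\<Sum>t\<in>R. A t * B t / C t) \<le> (\<Sum>t\<in>F \<times> G \<times> H. A t * B t / C t)"
    using RFGH finF Anon by (intro sum_mono2) auto
  also have "\<dots> = (\<Sum>x\<in>F. \<Sum>y\<in>G. \<Sum>z\<in>H. dp fh (x, z) * dp gh (y, z) / dp h z)"
    by (simp add: sum.cartesian_product A_def B_def C_def split_beta)
  also have "\<dots> = (\<Sum>x\<in>F. \<Sum>z\<in>H. \<Sum>y\<in>G. dp fh (x, z) * dp gh (y, z) / dp h z)"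
    by (rule sum.cong[OF refl], rule sum.swap)
  also have "\<dots> = (\<Sum>z\<in>H. \<Sum>x\<in>F. \<Sum>y\<in>G. dp fh (x, z) * dp gh (y, z) / dp h z)"
    by (rule sum.swap)
  also have "\<dots> = (\<Sum>z\<in>H. (\<Sum>x\<in>F. dp fh (x, z)) * (\<Sum>y\<in>G. dp gh (y, z)) / dp h z)"
    by (simp add: sum_product sum_divide_distrib)
  also have "\<dots> = (\<Sum>z\<in>H. dp h z * dp h z / dp h z)"
    using marginal[OF f h] marginal[OF g h] by (simp add: F_def G_def fh_def gh_def)
  also have "\<dots> = (\<Sum>z\<in>H. dp h z)" by (intro sum.cong) auto
  also have "\<dots> = 1" using sum_dp[OF h] by (simp add: H_def)
  finally have sABC: "(\<Sum>t\<in>R. A t * B t / C t) \<le> 1" .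
  have "(\<Sum>t\<in>R. r t * ln (A t) + r t * ln (B t) - r t * ln (C t) - r t * ln (r t)) \<le> (\<Sum>t\<in>R. A t * B t / C t - r t)"
    using trm by (rule sum_mono)
  then have "- ent fh - ent gh + ent h + ent X \<le> 1 - 1"
    using sA sB sC sr s1 sABC by (simp add: sum.distrib sum_subtractf)
  then show ?thesis by (simp add: X_def fh_def gh_def)
qed

end

locale mps = prob_space M for M :: "'a measure" +
  fixes T :: "'a \<Rightarrow> 'a"
  assumes Tm: "T \<in> measurable M M"
    and Tp: "\<And>B. B \<in> sets M \<Longrightarrow> measure M (T -` B \<inter> space M) = measure M B"
begin

lemma Tn_meas: "(T ^^ n) \<in> measurable M M"
proof (induction n)
  case (Suc n)
  have "T \<circ> (T ^^ n) \<in> measurable M M" by (rule measurable_comp[OF Suc.IH Tm])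
  then show ?case by (simp add: comp_def)
qed simp

lemma Tn_space: "w \<in> space M \<Longrightarrow> (T ^^ n) w \<in> space M"
  using measurable_space[OF Tn_meas] by blast

lemma Tn_pres: "B \<in> sets M \<Longrightarrow> measure M ((T ^^ n) -` B \<inter> space M) = measure M B"
proof (induction n arbitrary: B)
  case 0 then show ?case using sets.sets_into_space by (simp add: Int_absorb2)
next
  case (Suc n)
  have eq: "(T ^^ Suc n) -` B \<inter> space M = T -` ((T ^^ n) -` B \<inter> space M) \<inter> space M"
    using measurable_space[OF Tm] by (auto simp: funpow_swap1)
  have m: "(T ^^ n) -` B \<inter> space M \<in> sets M" using measurable_sets[OF Tn_meas Suc.prems] .
  show ?case unfolding eq using Tp[OF m] Suc.IH[OF Suc.prems] by simp
qed

lemma simple_Tn: "simple_function M f \<Longrightarrow> simple_function M (\<lambda>w. f ((T ^^ n) w))"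
  by (rule simple_function_comp[OF Tn_meas])

lemma ent_Tn:
  assumes f: "simple_function M f"
  shows "ent (\<lambda>w. f ((T ^^ n) w)) = ent f"
proof -
  have fin: "finite (f ` space M)" using f by (simp add: simple_function_def)
  have sub: "(\<lambda>w. f ((T ^^ n) w)) ` space M \<subseteq> f ` space M" using Tn_space by auto
  have dpeq: "dp (\<lambda>w. f ((T ^^ n) w)) y = dp f y" for y
  proof -
    have "(\<lambda>w. f ((T ^^ n) w)) -` {y} \<inter> space M = (T ^^ n) -` (f -` {y} \<inter> space M) \<inter> space M"
      using Tn_space by auto
    moreover have "f -` {y} \<inter> space M \<in> sets M"
    proof (cases "y \<in> f ` space M")
      case True then show ?thesis using f by (auto simp: simple_function_def)
    next
      case False then have "f -` {y} \<inter> space M = {}" by auto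
      then show ?thesis by simp
    qed
    ultimately show ?thesis unfolding dp_def using Tn_pres by metis
  qed
  have "ent (\<lambda>w. f ((T ^^ n) w)) = - (\<Sum>y\<in>f ` space M. eta (dp (\<lambda>w. f ((T ^^ n) w)) y))"
    by (rule ent_superset[OF fin sub])
  also have "\<dots> = ent f" by (simp add: dpeq ent_def)
  finally show ?thesis .
qed

lemma ent_T:
  assumes f: "simple_function M f"
  shows "ent (\<lambda>w. f (T w)) = ent f"
  using ent_Tn[OF f, of 1] by simp

definition Ls :: "('a \<Rightarrow> 'b) \<Rightarrow> nat \<Rightarrow> 'a \<Rightarrow> 'b list" where
  "Ls g n w = map (\<lambda>k. g ((T ^^ k) w)) [0..<n]"

lemma Ls_0: "Ls g 0 w = []" by (simp add: Ls_def)

lemma Ls_snoc: "Ls g (Suc n) w = Ls g n w @ [g ((T ^^ n) w)]"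
  by (simp add: Ls_def)

lemma Ls_cons: "Ls g (Suc n) w = g w # Ls g n (T w)"
  by (simp add: Ls_def upt_conv_Cons map_Suc_upt[symmetric] funpow_swap1 del: upt_Suc)

lemma Ls_length[simp]: "length (Ls g n w) = n" by (simp add: Ls_def)

lemma Ls_nth: "k < n \<Longrightarrow> Ls g n w ! k = g ((T ^^ k) w)" by (simp add: Ls_def)

lemma Ls_simple: "simple_function M g \<Longrightarrow> simple_function M (Ls g n)"
proof (induction n)
  case 0 then show ?case by (simp add: Ls_0[abs_def])
next
  case (Suc n)
  have "simple_function M (\<lambda>w. (Ls g n w, g ((T ^^ n) w)))"
    by (intro simple_function_Pair Suc.IH[OF Suc.prems] simple_Tn Suc.prems)
  then have "simple_function M ((\<lambda>p. fst p @ [snd p]) \<circ> (\<lambda>w. (Ls g n w, g ((T ^^ n) w))))"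
    by (rule simple_function_compose)
  then show ?case by (simp add: comp_def Ls_snoc[abs_def])
qed

definition ad :: "('a \<Rightarrow> 'b) \<Rightarrow> nat \<Rightarrow> real" where
  "ad g n = ent (Ls g (Suc n)) - ent (Ls g n)"

lemma ad_alt:
  assumes g: "simple_function M g"
  shows "ad g n = ent (\<lambda>w. (g w, Ls g n (T w))) - ent (\<lambda>w. Ls g n (T w))"
proof -
  have sV: "simple_function M (\<lambda>w. Ls g n (T w))"
    by (rule simple_function_comp[OF Tm Ls_simple[OF g]])
  have "ent (Ls g (Suc n)) = ent (\<lambda>w. (g w, Ls g n (T w)))"
    by (rule ent_eq[where \<phi>="\<lambda>p. fst p # snd p" and \<psi>="\<lambda>xs. (hd xs, tl xs)"])
       (use g sV Ls_simple in \<open>auto simp: Ls_cons\<close>)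
  moreover have "ent (\<lambda>w. Ls g n (T w)) = ent (Ls g n)" by (rule ent_T[OF Ls_simple[OF g]])
  ultimately show ?thesis by (simp add: ad_def)
qed

lemma ad_nonneg:
  assumes g: "simple_function M g"
  shows "0 \<le> ad g n"
proof -
  have sV: "simple_function M (\<lambda>w. Ls g n (T w))"
    by (rule simple_function_comp[OF Tm Ls_simple[OF g]])
  have "ent (\<lambda>w. Ls g n (T w)) \<le> ent (\<lambda>w. (g w, Ls g n (T w)))"
    by (rule ent_mono[where \<phi>=snd]) (use g sV in auto)
  then show ?thesis by (simp add: ad_alt[OF g])
qed

lemma ad_dec:
  assumes g: "simple_function M g"
  shows "ad g (Suc n) \<le> ad g n"
proof -
  define V where "V = (\<lambda>w. Ls g n (T w))"
  define e where "e = (\<lambda>w. g ((T ^^ n) (T w)))"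
  have sV: "simple_function M V" unfolding V_def
    by (rule simple_function_comp[OF Tm Ls_simple[OF g]])
  have se: "simple_function M e" unfolding e_def
    by (rule simple_function_comp[OF Tm simple_Tn[OF g]])
  have VS: "Ls g (Suc n) (T w) = V w @ [e w]" for w by (simp add: V_def e_def Ls_snoc)
  have sVS: "simple_function M (\<lambda>w. Ls g (Suc n) (T w))"
    by (rule simple_function_comp[OF Tm Ls_simple[OF g]])
  have 1: "ent (\<lambda>w. (g w, Ls g (Suc n) (T w))) = ent (\<lambda>w. (g w, e w, V w))"
    by (rule ent_eq[where \<phi>="\<lambda>(x,y,xs). (x, xs @ [y])" and \<psi>="\<lambda>(x, ys). (x, last ys, butlast ys)"])
       (use g sV se sVS in \<open>auto simp: VS\<close>)
  have 2: "ent (\<lambda>w. Ls g (Suc n) (T w)) = ent (\<lambda>w. (e w, V w))"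
    by (rule ent_eq[where \<phi>="\<lambda>(y,xs). xs @ [y]" and \<psi>="\<lambda>ys. (last ys, butlast ys)"])
       (use g sV se sVS in \<open>auto simp: VS\<close>)
  have "ent (\<lambda>w. (g w, e w, V w)) + ent V \<le> ent (\<lambda>w. (g w, V w)) + ent (\<lambda>w. (e w, V w))"
    by (rule ssa[OF g se sV])
  then show ?thesis using 1 2 by (simp add: ad_alt[OF g] V_def)
qed

lemma ent_Ls_sum: "ent (Ls g n) = (\<Sum>k<n. ad g k)"
proof -
  have "(\<Sum>k<n. ad g k) = ent (Ls g n) - ent (Ls g 0)"
    unfolding ad_def by (rule sum_lessThan_telescope)
  moreover have "ent (Ls g 0) = 0" using ent_const[of "[]"] by (simp add: Ls_0[abs_def])
  ultimately show ?thesis by simp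
qed

definition hh :: "('a \<Rightarrow> 'b) \<Rightarrow> real" where "hh g = lim (ad g)"

lemma ad_lim:
  assumes g: "simple_function M g"
  shows "ad g \<longlonglongrightarrow> hh g" and "\<And>n. hh g \<le> ad g n" and "decseq (ad g)"
proof -
  show dec: "decseq (ad g)" using ad_dec[OF g] by (simp add: decseq_SucI)
  obtain L where L: "ad g \<longlonglongrightarrow> L" "\<forall>i. L \<le> ad g i"
    using decseq_convergent[OF dec, of 0] ad_nonneg[OF g] by blast
  then have "hh g = L" unfolding hh_def by (intro limI) simp
  then show "ad g \<longlonglongrightarrow> hh g" "\<And>n. hh g \<le> ad g n" using L by auto
qed

end

context mps
begin

lemma cent_Ls:
  assumes q: "simple_function M q" and r: "simple_function M r"
  shows "ent (\<lambda>w. (Ls q n w, Ls r n w)) - ent (Ls r n) \<le> real n * (ent (\<lambda>w. (q w, r w)) - ent r)"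
proof (induction n)
  case 0 then show ?case by (simp add: Ls_0 ent_const)
next
  case (Suc n)
  define A where "A = Ls q n" define C where "C = Ls r n"
  define B where "B = (\<lambda>w. q ((T ^^ n) w))" define D where "D = (\<lambda>w. r ((T ^^ n) w))"
  have sA: "simple_function M A" and sC: "simple_function M C" unfolding A_def C_def
    using Ls_simple q r by auto
  have sB: "simple_function M B" and sD: "simple_function M D" unfolding B_def D_def
    using simple_Tn q r by auto
  have sQ: "simple_function M (Ls q (Suc n))" and sR: "simple_function M (Ls r (Suc n))"
    using Ls_simple q r by auto
  have QS: "Ls q (Suc n) w = A w @ [B w]" and RS: "Ls r (Suc n) w = C w @ [D w]" for w
    by (simp_all add: A_def B_def C_def D_def Ls_snoc)
  have sQR': "simple_function M (\<lambda>w. (A w @ [B w], C w @ [D w]))"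
    using simple_function_Pair[OF sQ sR] by (simp add: QS RS)
  have sR': "simple_function M (\<lambda>w. C w @ [D w])"
    using sR by (simp add: RS[abs_def])
  have 1: "ent (\<lambda>w. (Ls q (Suc n) w, Ls r (Suc n) w)) = ent (\<lambda>w. (B w, (A w, C w), D w))"
    by (rule ent_eq[where \<phi>="\<lambda>(b,(a,c),d). (a @ [b], c @ [d])"
          and \<psi>="\<lambda>(xs, ys). (last xs, (butlast xs, butlast ys), last ys)"])
       (use sA sB sC sD sQR' in \<open>auto simp: QS RS\<close>)
  have 2: "ent (Ls r (Suc n)) = ent (\<lambda>w. (D w, C w))"
    by (rule ent_eq[where \<phi>="\<lambda>(d,c). c @ [d]" and \<psi>="\<lambda>ys. (last ys, butlast ys)"])
       (use sC sD sR sR' in \<open>auto simp: RS\<close>)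
  have 3: "ent (\<lambda>w. ((A w, C w), D w)) = ent (\<lambda>w. (A w, D w, C w))"
    by (rule ent_eq[where \<phi>="\<lambda>(a,d,c). ((a,c),d)" and \<psi>="\<lambda>((a,c),d). (a,d,c)"])
       (use sA sC sD in auto)
  have 4: "ent (\<lambda>w. (D w, C w)) = ent (\<lambda>w. (C w, D w))"
    by (rule ent_eq[where \<phi>="\<lambda>(c,d). (d,c)" and \<psi>="\<lambda>(d,c). (c,d)"])
       (use sC sD in auto)
  have s1: "ent (\<lambda>w. (B w, (A w, C w), D w)) + ent D \<le> ent (\<lambda>w. (B w, D w)) + ent (\<lambda>w. ((A w, C w), D w))"
    by (rule ssa) (use sA sB sC sD in auto)
  have s2: "ent (\<lambda>w. (A w, D w, C w)) + ent C \<le> ent (\<lambda>w. (A w, C w)) + ent (\<lambda>w. (D w, C w))"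
    by (rule ssa[OF sA sD sC])
  have 5: "ent (\<lambda>w. (B w, D w)) = ent (\<lambda>w. (q w, r w))"
    using ent_Tn[of "\<lambda>w. (q w, r w)" n] q r by (simp add: B_def D_def)
  have 6: "ent D = ent r" using ent_Tn[OF r] by (simp add: D_def)
  have IH: "ent (\<lambda>w. (A w, C w)) - ent C \<le> real n * (ent (\<lambda>w. (q w, r w)) - ent r)"
    using Suc.IH by (simp add: A_def C_def)
  show ?case using 1 2 3 4 5 6 s1 s2 IH by (simp add: algebra_simps)
qed

lemma ent_Ls_bound:
  assumes q: "simple_function M q" and r: "simple_function M r"
  shows "ent (Ls q n) \<le> ent (Ls r n) + real n * (ent (\<lambda>w. (q w, r w)) - ent r)"
proof -
  have "ent (Ls q n) \<le> ent (\<lambda>w. (Ls q n w, Ls r n w))"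
    by (rule ent_mono[where \<phi>=fst]) (auto intro!: simple_function_Pair Ls_simple q r)
  then show ?thesis using cent_Ls[OF q r, of n] by simp
qed

lemma hh_bound:
  assumes q: "simple_function M q" and r: "simple_function M r"
  shows "hh q \<le> hh r + (ent (\<lambda>w. (q w, r w)) - ent r)"
proof -
  define c where "c = ent (\<lambda>w. (q w, r w)) - ent r"
  define b where "b = ad r"
  have bm: "hh q \<le> b m + c" for m
  proof -
    define K where "K = (\<Sum>k<m. b k) - real m * b m"
    have ev: "\<forall>n\<ge>max m 1. hh q \<le> b m + c + K / real n"
    proof (intro allI impI)
      fix n assume n: "max m 1 \<le> n"
      have "real n * hh q = (\<Sum>k<n. hh q)" by simp
      also have "\<dots> \<le> (\<Sum>k<n. ad q k)" by (intro sum_mono ad_lim(2)[OF q])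
      also have "\<dots> = ent (Ls q n)" by (simp add: ent_Ls_sum)
      also have "\<dots> \<le> ent (Ls r n) + real n * c" using ent_Ls_bound[OF q r] by (simp add: c_def)
      also have "ent (Ls r n) = (\<Sum>k<n. b k)" by (simp add: ent_Ls_sum b_def)
      also have "(\<Sum>k<n. b k) = (\<Sum>k<m. b k) + (\<Sum>k\<in>{m..<n}. b k)"
      proof -
        have eqs: "{..<n} = {..<m} \<union> {m..<n}" using n by auto
        show ?thesis unfolding eqs by (rule sum.union_disjoint) auto
      qed
      also have "(\<Sum>k\<in>{m..<n}. b k) \<le> (\<Sum>k\<in>{m..<n}. b m)"
        using ad_lim(3)[OF r] by (intro sum_mono) (auto simp: b_def decseq_def)
      also have "(\<Sum>k\<in>{m..<n}. b m) = (real n - real m) * b m" using n by simp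
      finally have "real n * hh q \<le> (\<Sum>k<m. b k) + (real n - real m) * b m + real n * c" by simp
      moreover have "real n * (b m + c + K / real n) = (\<Sum>k<m. b k) + (real n - real m) * b m + real n * c"
        using n by (simp add: K_def field_simps)
      ultimately have "real n * hh q \<le> real n * (b m + c + K / real n)" by linarith
      then show "hh q \<le> b m + c + K / real n" using n by simp
    qed
    have "(\<lambda>n. b m + c + K / real n) \<longlonglongrightarrow> b m + c + 0"
      by (intro tendsto_intros)
    then show ?thesis using ev by (intro LIMSEQ_le_const[where a="hh q"]) (auto intro!: exI[of _ "max m 1"])
  qed
  have "(\<lambda>m. b m + c) \<longlonglongrightarrow> hh r + c" unfolding b_def by (intro tendsto_intros ad_lim(1)[OF r])
  then have "hh q \<le> hh r + c" using bm by (intro LIMSEQ_le_const) auto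
  then show ?thesis by (simp add: c_def)
qed

lemma Tadd: "(T ^^ i) ((T ^^ j) w) = (T ^^ (i + j)) w" by (simp add: funpow_add)

lemma Ls_window1:
  assumes "1 \<le> k"
  shows "Ls (Ls p k) m w = map (\<lambda>j. take k (drop j (Ls p (m + k - 1) w))) [0..<m]"
proof (rule nth_equalityI)
  fix j assume "j < length (Ls (Ls p k) m w)"
  then have j: "j < m" by simp
  show "Ls (Ls p k) m w ! j = map (\<lambda>j. take k (drop j (Ls p (m + k - 1) w))) [0..<m] ! j"
  proof (rule nth_equalityI)
    show "length (Ls (Ls p k) m w ! j) = length (map (\<lambda>j. take k (drop j (Ls p (m + k - 1) w))) [0..<m] ! j)"
      using j assms by (simp add: Ls_nth)
    fix i assume "i < length (Ls (Ls p k) m w ! j)"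
    then have i: "i < k" using j by (simp add: Ls_nth)
    show "Ls (Ls p k) m w ! j ! i = map (\<lambda>j. take k (drop j (Ls p (m + k - 1) w))) [0..<m] ! j ! i"
      using i j assms by (simp add: Ls_nth Tadd add.commute)
  qed
qed simp

lemma Ls_window2:
  assumes "1 \<le> k" "1 \<le> m"
  shows "Ls p (m + k - 1) w = map hd (Ls (Ls p k) m w) @ tl (last (Ls (Ls p k) m w))"
proof (rule nth_equalityI)
  have ne: "Ls (Ls p k) m w \<noteq> []" using assms by (auto simp: Ls_def)
  have lst: "last (Ls (Ls p k) m w) = Ls p k ((T ^^ (m - 1)) w)"
    using ne assms by (simp add: last_conv_nth Ls_nth)
  show "length (Ls p (m + k - 1) w) = length (map hd (Ls (Ls p k) m w) @ tl (last (Ls (Ls p k) m w)))"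
    using assms lst by simp
  fix i assume "i < length (Ls p (m + k - 1) w)"
  then have i: "i < m + k - 1" by simp
  show "Ls p (m + k - 1) w ! i = (map hd (Ls (Ls p k) m w) @ tl (last (Ls (Ls p k) m w))) ! i"
  proof (cases "i < m")
    case True
    obtain k' where "k = Suc k'" using assms by (cases k) auto
    then have "hd (Ls p k ((T ^^ i) w)) = p ((T ^^ i) w)" by (simp add: Ls_cons)
    then show ?thesis using True i by (simp add: nth_append Ls_nth)
  next
    case False
    have "tl (last (Ls (Ls p k) m w)) ! (i - m) = Ls p k ((T ^^ (m - 1)) w) ! Suc (i - m)"
      using lst False i assms by (simp add: nth_tl)
    also have "\<dots> = p ((T ^^ i) w)"
    proof -
      obtain i' where i': "i = Suc i'" using False assms by (cases i) auto
      show ?thesis using False i assms unfolding i' by (simp add: Ls_nth Tadd)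
    qed
    finally show ?thesis using False i by (simp add: nth_append Ls_nth)
  qed
qed

lemma ent_window:
  assumes p: "simple_function M p" and "1 \<le> k" "1 \<le> m"
  shows "ent (Ls (Ls p k) m) = ent (Ls p (m + k - 1))"
  by (rule ent_eq[where \<phi>="\<lambda>xs. map (\<lambda>j. take k (drop j xs)) [0..<m]"
        and \<psi>="\<lambda>xss. map hd xss @ tl (last xss)"])
     (use Ls_simple[OF Ls_simple[OF p]] Ls_simple[OF p] Ls_window1[OF assms(2)] Ls_window2[OF assms(2,3)] in auto)

lemma hh_window:
  assumes p: "simple_function M p" and k: "1 \<le> k"
  shows "hh (Ls p k) = hh p"
proof -
  have sp: "simple_function M (Ls p k)" using Ls_simple[OF p] .
  have eq: "ad (Ls p k) (m + 1) = ad p (m + k)" for m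
  proof -
    have "ent (Ls (Ls p k) (Suc (m + 1))) = ent (Ls p (Suc (m + k)))"
      using ent_window[OF p k, of "Suc (m+1)"] k by simp
    moreover have "ent (Ls (Ls p k) (m + 1)) = ent (Ls p (m + k))"
      using ent_window[OF p k, of "m+1"] k by simp
    ultimately show ?thesis by (simp add: ad_def)
  qed
  have "(\<lambda>m. ad p (m + k)) \<longlonglongrightarrow> hh p" by (rule LIMSEQ_ignore_initial_segment[OF ad_lim(1)[OF p]])
  moreover have "(\<lambda>m. ad (Ls p k) (m + 1)) = (\<lambda>m. ad p (m + k))" using eq by auto
  ultimately have "(\<lambda>m. ad (Ls p k) (m + 1)) \<longlonglongrightarrow> hh p" by simp
  then have "ad (Ls p k) \<longlonglongrightarrow> hh p" by (rule LIMSEQ_offset)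
  then show ?thesis using ad_lim(1)[OF sp] LIMSEQ_unique by blast
qed

end

definition lab :: "'a set set \<Rightarrow> 'a \<Rightarrow> 'a set" where
  "lab Q w = (THE A. A \<in> Q \<and> w \<in> A)"

lemma part_disj:
  assumes Q: "finite_partition M Q" and "A \<in> Q" "B \<in> Q" "w \<in> A" "w \<in> B"
  shows "A = B"
  using assms unfolding finite_partition_def by blast

lemma part_cover:
  assumes Q: "finite_partition M Q" and "w \<in> space M"
  obtains A where "A \<in> Q" "w \<in> A"
  using assms unfolding finite_partition_def by blast

lemma lab_props:
  assumes Q: "finite_partition M Q" and w: "w \<in> space M"
  shows "lab Q w \<in> Q" "w \<in> lab Q w"
proof -
  obtain A where A: "A \<in> Q" "w \<in> A" using part_cover[OF Q w] .
  have "\<exists>!A. A \<in> Q \<and> w \<in> A"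
    using A part_disj[OF Q] by blast
  then have "lab Q w \<in> Q \<and> w \<in> lab Q w" unfolding lab_def by (rule theI')
  then show "lab Q w \<in> Q" "w \<in> lab Q w" by auto
qed

lemma lab_iff:
  assumes Q: "finite_partition M Q" and w: "w \<in> space M" and C: "C \<in> Q"
  shows "lab Q w = C \<longleftrightarrow> w \<in> C"
proof
  assume "w \<in> C"
  with lab_props[OF Q w] C part_disj[OF Q] show "lab Q w = C" by blast
qed (use lab_props[OF Q w] in auto)

lemma part_sub: "finite_partition M Q \<Longrightarrow> C \<in> Q \<Longrightarrow> C \<subseteq> space M"
  by (auto simp: finite_partition_def)

lemma part_sets: "finite_partition M Q \<Longrightarrow> C \<in> Q \<Longrightarrow> C \<in> sets M"
  by (auto simp: finite_partition_def)

lemma lab_fiber: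
  assumes Q: "finite_partition M Q" and C: "C \<in> Q"
  shows "lab Q -` {C} \<inter> space M = C"
  using lab_iff[OF Q _ C] part_sub[OF Q C] by auto

lemma lab_simple:
  assumes Q: "finite_partition M Q"
  shows "simple_function M (lab Q)"
  unfolding simple_function_def
proof
  have "lab Q ` space M \<subseteq> Q" using lab_props[OF Q] by auto
  then show "finite (lab Q ` space M)" using Q finite_subset by (auto simp: finite_partition_def)
next
  show "\<forall>x\<in>lab Q ` space M. lab Q -` {x} \<inter> space M \<in> sets M"
    using lab_fiber[OF Q] lab_props[OF Q] part_sets[OF Q] by auto
qed

context mps
begin

definition Cset :: "'a set list \<Rightarrow> 'a set" where
  "Cset xs = space M \<inter> (\<Inter>k<length xs. (T ^^ k) -` (xs ! k))"

lemma refine_eq: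
  "refine M T Q n = Cset ` {xs. set xs \<subseteq> Q \<and> length xs = n}"
proof (intro equalityI subsetI)
  fix A assume "A \<in> refine M T Q n"
  then obtain a where A: "A = space M \<inter> (\<Inter>k<n. (T ^^ k) -` (a k))" and a: "\<forall>k<n. a k \<in> Q"
    by (auto simp: refine_def)
  have "A = Cset (map a [0..<n])" by (simp add: A Cset_def)
  moreover have "map a [0..<n] \<in> {xs. set xs \<subseteq> Q \<and> length xs = n}" using a by auto
  ultimately show "A \<in> Cset ` {xs. set xs \<subseteq> Q \<and> length xs = n}" by blast
next
  fix A assume "A \<in> Cset ` {xs. set xs \<subseteq> Q \<and> length xs = n}"
  then obtain xs where A: "A = Cset xs" and xs: "set xs \<subseteq> Q" "length xs = n" by auto
  have "\<forall>k<n. xs ! k \<in> Q" using xs by auto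
  then show "A \<in> refine M T Q n" unfolding refine_def A Cset_def using xs by blast
qed

lemma Cset_disj:
  assumes Q: "finite_partition M Q" and xs: "set xs \<subseteq> Q" and ys: "set ys \<subseteq> Q"
    and len: "length xs = length ys" and ne: "xs \<noteq> ys"
  shows "Cset xs \<inter> Cset ys = {}"
proof (rule ccontr)
  assume "Cset xs \<inter> Cset ys \<noteq> {}"
  then obtain w where w: "w \<in> Cset xs" "w \<in> Cset ys" by blast
  have "xs ! k = ys ! k" if k: "k < length xs" for k
  proof -
    have "(T ^^ k) w \<in> xs ! k" "(T ^^ k) w \<in> ys ! k" using w k len by (auto simp: Cset_def)
    moreover have "xs ! k \<in> Q" "ys ! k \<in> Q" using xs ys k len by auto
    ultimately show ?thesis using part_disj[OF Q] by blast
  qed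
  then have "xs = ys" using len by (intro nth_equalityI) auto
  then show False using ne by simp
qed

lemma Cset_sets: "finite_partition M Q \<Longrightarrow> set xs \<subseteq> Q \<Longrightarrow> Cset xs \<in> sets M"
proof -
  assume Q: "finite_partition M Q" and xs: "set xs \<subseteq> Q"
  have m: "(T ^^ k) -` (xs ! k) \<inter> space M \<in> sets M" if "k < length xs" for k
  proof -
    have "xs ! k \<in> Q" using xs that by auto
    then show ?thesis using measurable_sets[OF Tn_meas part_sets[OF Q]] by blast
  qed
  show ?thesis
  proof (cases "xs = []")
    case True then show ?thesis by (simp add: Cset_def)
  next
    case False
    have "Cset xs = (\<Inter>k\<in>{..<length xs}. (T ^^ k) -` (xs ! k) \<inter> space M)"
      using False by (auto simp: Cset_def)
    also have "\<dots> \<in> sets M" using False m by (intro sets.finite_INT) auto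
    finally show ?thesis .
  qed
qed

lemma part_entropy_sum:
  assumes Q: "finite_partition M Q"
  shows "part_entropy M (refine M T Q n) = - (\<Sum>xs\<in>{xs. set xs \<subseteq> Q \<and> length xs = n}. eta (measure M (Cset xs)))"
proof -
  have fin: "finite {xs. set xs \<subseteq> Q \<and> length xs = n}"
    using Q by (intro finite_lists_length_eq) (auto simp: finite_partition_def)
  have "(\<Sum>A\<in>Cset ` {xs. set xs \<subseteq> Q \<and> length xs = n}. measure M A * ln (measure M A))
     = (\<Sum>xs\<in>{xs. set xs \<subseteq> Q \<and> length xs = n}. (\<lambda>A. measure M A * ln (measure M A)) (Cset xs))"
  proof (rule sum.reindex_nontrivial[OF fin, unfolded comp_def])
    fix xs ys assume "xs \<in> {xs. set xs \<subseteq> Q \<and> length xs = n}" "ys \<in> {xs. set xs \<subseteq> Q \<and> length xs = n}"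
      "xs \<noteq> ys" "Cset xs = Cset ys"
    then have "Cset xs = {}" using Cset_disj[OF Q, of xs ys] by auto
    then show "measure M (Cset xs) * ln (measure M (Cset xs)) = 0" by simp
  qed
  then show ?thesis by (simp add: part_entropy_def refine_eq eta_def)
qed

lemma ent_Ls_lab:
  assumes Q: "finite_partition M Q"
  shows "ent (Ls (lab Q) n) = - (\<Sum>xs\<in>{xs. set xs \<subseteq> Q \<and> length xs = n}. eta (measure M (Cset xs)))"
proof -
  have fin: "finite {xs. set xs \<subseteq> Q \<and> length xs = n}"
    using Q by (intro finite_lists_length_eq) (auto simp: finite_partition_def)
  have sub: "Ls (lab Q) n ` space M \<subseteq> {xs. set xs \<subseteq> Q \<and> length xs = n}"
    using lab_props[OF Q] Tn_space by (auto simp: Ls_def)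
  have dpeq: "dp (Ls (lab Q) n) xs = measure M (Cset xs)" if xs: "xs \<in> {xs. set xs \<subseteq> Q \<and> length xs = n}" for xs
  proof -
    have "Ls (lab Q) n -` {xs} \<inter> space M = Cset xs"
    proof (intro equalityI subsetI)
      fix w assume w: "w \<in> Ls (lab Q) n -` {xs} \<inter> space M"
      then have "\<forall>k<n. lab Q ((T ^^ k) w) = xs ! k" by (auto simp: Ls_def)
      then show "w \<in> Cset xs" using w lab_props[OF Q Tn_space] xs by (auto simp: Cset_def) metis
    next
      fix w assume w: "w \<in> Cset xs"
      have wsp: "w \<in> space M" using w by (simp add: Cset_def)
      have "lab Q ((T ^^ k) w) = xs ! k" if k: "k < n" for k
      proof -
        have "xs ! k \<in> Q" using xs k by auto
        moreover have "(T ^^ k) w \<in> xs ! k" using w xs k by (auto simp: Cset_def)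
        ultimately show ?thesis using lab_iff[OF Q Tn_space[OF wsp]] by blast
      qed
      then show "w \<in> Ls (lab Q) n -` {xs} \<inter> space M" using wsp xs
        by (auto simp: Ls_def intro!: nth_equalityI)
    qed
    then show ?thesis by (simp add: dp_def)
  qed
  show ?thesis by (simp add: ent_superset[OF fin sub] dpeq)
qed

lemma part_entropy_ent:
  assumes Q: "finite_partition M Q"
  shows "part_entropy M (refine M T Q n) = ent (Ls (lab Q) n)"
  using part_entropy_sum[OF Q] ent_Ls_lab[OF Q] by simp

lemma part_KS_hh:
  assumes Q: "finite_partition M Q"
  shows "part_KS M T Q = hh (lab Q)"
  unfolding part_KS_def hh_def ad_def part_entropy_ent[OF Q] ..

end

lemma eta_bound:
  fixes x :: real assumes x: "0 < x" "x \<le> 1"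
  shows "- (x * ln x) \<le> 2 * sqrt x"
proof -
  define s where "s = sqrt x"
  have s: "0 < s" "x = s * s" using x by (auto simp: s_def real_sqrt_mult[symmetric])
  have lnx: "ln x = 2 * ln s" using s by (simp add: ln_mult)
  have "ln (1 / s) \<le> 1 / s - 1" using s by (intro ln_le_minus_one) auto
  then have l: "- ln s \<le> 1 / s - 1" using s by (simp add: ln_div)
  have "- (x * ln x) = 2 * (s * s) * (- ln s)" using s lnx by simp
  also have "\<dots> \<le> 2 * (s * s) * (1 / s - 1)" using l s by (intro mult_left_mono) auto
  also have "\<dots> = 2 * s - 2 * s * s" using s by (simp add: field_simps)
  also have "\<dots> \<le> 2 * s" using s by simp
  finally show ?thesis by (simp add: s_def)
qed

context prob_space
begin

lemma cent_small:
  fixes q :: "'a \<Rightarrow> 'b" and r :: "'a \<Rightarrow> 'b"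
  assumes q: "simple_function M q" and r: "simple_function M r"
    and qQ: "q ` space M \<subseteq> Q0" and rQ: "r ` space M \<subseteq> Q0" and Q0: "finite Q0"
    and e: "prob {w\<in>space M. q w \<noteq> r w} \<le> e" "e \<le> 1"
  shows "ent (\<lambda>w. (q w, r w)) - ent r \<le> real (card Q0) ^ 2 * (2 * sqrt e)"
proof -
  define X where "X = (\<lambda>w. (q w, r w))"
  have X: "simple_function M X" unfolding X_def using q r by auto
  define R where "R = X ` space M"
  have finR: "finite R" using X by (simp add: R_def simple_function_def)
  define E where "E = {w\<in>space M. q w \<noteq> r w}"
  have Eeq: "E = X -` {t. fst t \<noteq> snd t} \<inter> space M" by (auto simp: E_def X_def)
  have Es: "E \<in> sets M" unfolding Eeq by (rule simple_functionD(2)[OF X])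
  have e0: "0 \<le> e" using e(1) measure_nonneg[of M "{w\<in>space M. q w \<noteq> r w}"] by linarith
  have ese: "e \<le> sqrt e"
  proof -
    have "sqrt e \<le> 1" "0 \<le> sqrt e" using e0 e(2) by auto
    then have "sqrt e * sqrt e \<le> sqrt e * 1" by (intro mult_left_mono) auto
    then show ?thesis using e0 by simp
  qed
  have sP: "(\<Sum>y\<in>r ` space M. dp r y * ln (dp r y)) = (\<Sum>t\<in>R. dp X t * ln (dp r (snd t)))"
    using pushforward[of X r snd "\<lambda>y. ln (dp r y)", OF X] by (simp add: X_def R_def)
  have cent: "ent X - ent r = (\<Sum>t\<in>R. dp X t * ln (dp r (snd t)) - dp X t * ln (dp X t))"
    by (simp add: ent_alt sP sum_subtractf R_def)
  have each: "dp X t * ln (dp r (snd t)) - dp X t * ln (dp X t) \<le> 2 * sqrt e" if t: "t \<in> R" for t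
  proof -
    have XS: "r w = snd (X w)" for w by (simp add: X_def)
    have pP: "dp X t \<le> dp r (snd t)" using dp_le_dp[of r snd X, OF XS X] t by (simp add: R_def)
    have P1: "dp r (snd t) \<le> 1" by (rule dp_le1)
    show ?thesis
    proof (cases "dp X t = 0")
      case True then show ?thesis using e0 by simp
    next
      case False
      then have p0: "0 < dp X t" using dp_nonneg[of X t] by simp
      then have P0: "0 < dp r (snd t)" using pP by simp
      show ?thesis
      proof (cases "fst t = snd t")
        case True
        have "dp X t * ln (dp r (snd t)) - dp X t * ln (dp X t) = dp X t * ln (dp r (snd t) / dp X t)"
          using p0 P0 by (simp add: ln_div algebra_simps)
        also have "\<dots> \<le> dp X t * (dp r (snd t) / dp X t - 1)"
          using p0 P0 by (intro mult_left_mono ln_le_minus_one) auto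
        also have "\<dots> = dp r (snd t) - dp X t" using p0 by (simp add: field_simps)
        also have "\<dots> = prob ((r -` {snd t} \<inter> space M) - (X -` {t} \<inter> space M))"
        proof -
          have sub: "X -` {t} \<inter> space M \<subseteq> r -` {snd t} \<inter> space M" by (auto simp: X_def)
          show ?thesis unfolding dp_def
            by (subst finite_measure_Diff) (use sub simple_functionD(2)[OF X] simple_functionD(2)[OF r] in auto)
        qed
        also have "\<dots> \<le> prob E"
        proof (rule finite_measure_mono[OF _ Es])
          show "r -` {snd t} \<inter> space M - X -` {t} \<inter> space M \<subseteq> E"
            using True by (auto simp: E_def X_def prod_eq_iff)
        qed
        also have "\<dots> \<le> e" using e(1) by (simp add: E_def)
        also have "\<dots> \<le> 2 * sqrt e" using ese e0 by simp
        finally show ?thesis .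
      next
        case False
        have pE: "dp X t \<le> e"
        proof -
          have "dp X t \<le> prob E" unfolding dp_def
            by (rule finite_measure_mono[OF _ Es]) (use False in \<open>auto simp: E_def X_def\<close>)
          then show ?thesis using e(1) by (simp add: E_def)
        qed
        have "dp X t * ln (dp r (snd t)) \<le> 0"
          using p0 P0 P1 by (intro mult_nonneg_nonpos) auto
        moreover have "- (dp X t * ln (dp X t)) \<le> 2 * sqrt (dp X t)"
          using p0 dp_le1[of X t] by (intro eta_bound) auto
        moreover have "sqrt (dp X t) \<le> sqrt e" using pE by simp
        ultimately show ?thesis by linarith
      qed
    qed
  qed
  have "ent X - ent r \<le> (\<Sum>t\<in>R. 2 * sqrt e)" unfolding cent by (rule sum_mono[OF each])
  also have "\<dots> = real (card R) * (2 * sqrt e)" by simp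
  also have "\<dots> \<le> real (card Q0) ^ 2 * (2 * sqrt e)"
  proof (rule mult_right_mono)
    have "R \<subseteq> Q0 \<times> Q0" using qQ rQ by (auto simp: R_def X_def)
    then have "card R \<le> card (Q0 \<times> Q0)" using Q0 by (intro card_mono) auto
    then have "card R \<le> card Q0 * card Q0" by (simp add: card_cartesian_product)
    then have "real (card R) \<le> real (card Q0 * card Q0)" by (simp only: of_nat_le_iff)
    then show "real (card R) \<le> real (card Q0) ^ 2" by (simp add: power2_eq_square)
  qed (use e0 in simp)
  finally show ?thesis by (simp add: X_def)
qed

end

definition sd :: "'a set \<Rightarrow> 'a set \<Rightarrow> 'a set" where "sd A B = (A - B) \<union> (B - A)"

context mps
begin

lemma Ls_take: "k \<le> k' \<Longrightarrow> Ls g k w = take k (Ls g k' w)"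
  by (simp add: Ls_def take_map)

lemma pre_lift: "k \<le> k' \<Longrightarrow> Ls g k -` S \<inter> space M = Ls g k' -` {xs. take k xs \<in> S} \<inter> space M"
  using Ls_take[of k k' g] by auto

lemma approx_sigma:
  assumes P: "finite_partition M P"
    and A: "A \<in> sigma_sets (space M) {(T ^^ n) -` C \<inter> space M | n C. C \<in> P}"
  shows "A \<in> sets M \<and> (\<forall>\<delta>>0. \<exists>k S. prob (sd A (Ls (lab P) k -` S \<inter> space M)) < \<delta>)"
  using A
proof (induction rule: sigma_sets.induct)
  case (Basic a)
  then obtain n C where a: "a = (T ^^ n) -` C \<inter> space M" and C: "C \<in> P" by auto
  have "a = Ls (lab P) (Suc n) -` {xs. xs ! n = C} \<inter> space M"
    using lab_iff[OF P Tn_space C] by (auto simp: a Ls_nth)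
  then have "sd a (Ls (lab P) (Suc n) -` {xs. xs ! n = C} \<inter> space M) = {}" by (simp add: sd_def)
  then have "\<forall>\<delta>>0. prob (sd a (Ls (lab P) (Suc n) -` {xs. xs ! n = C} \<inter> space M)) < \<delta>" by simp
  moreover have "a \<in> sets M" unfolding a using measurable_sets[OF Tn_meas part_sets[OF P C]] .
  ultimately show ?case by blast
next
  case Empty
  have "sd {} (Ls (lab P) 0 -` {} \<inter> space M) = {}" by (simp add: sd_def)
  then show ?case by (auto intro!: exI[of _ 0] exI[of _ "{}"])
next
  case (Compl a)
  have as: "a \<in> sets M" using Compl.IH by simp
  have "\<exists>k S. prob (sd (space M - a) (Ls (lab P) k -` S \<inter> space M)) < \<delta>" if d: "\<delta> > 0" for \<delta>
  proof -
    obtain k S where kS: "prob (sd a (Ls (lab P) k -` S \<inter> space M)) < \<delta>" using Compl.IH d by blast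
    have "sd (space M - a) (Ls (lab P) k -` (- S) \<inter> space M) = sd a (Ls (lab P) k -` S \<inter> space M)"
      using sets.sets_into_space[OF as] by (auto simp: sd_def)
    then show ?thesis using kS by metis
  qed
  then show ?case using as by auto
next
  case (Union a)
  have as: "\<And>i. a i \<in> sets M" using Union.IH by simp
  have U: "(\<Union>i. a i) \<in> sets M" using as by auto
  have "\<exists>k S. prob (sd (\<Union>i. a i) (Ls (lab P) k -` S \<inter> space M)) < \<delta>" if d: "\<delta> > 0" for \<delta>
  proof -
    define A' where "A' N = (\<Union>i<N. a i)" for N
    have A's: "A' N \<in> sets M" for N unfolding A'_def using as by auto
    have inc: "incseq A'" unfolding A'_def incseq_def by (intro allI impI UN_mono) auto
    have UA: "(\<Union>N. A' N) = (\<Union>i. a i)" unfolding A'_def by auto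
    have "(\<lambda>N. prob (A' N)) \<longlonglongrightarrow> prob (\<Union>N. A' N)"
      using A's inc by (intro finite_Lim_measure_incseq) auto
    then have "(\<lambda>N. prob (A' N)) \<longlonglongrightarrow> prob (\<Union>i. a i)" by (simp add: UA)
    moreover have "\<delta> / 2 > 0" using d by simp
    ultimately obtain N where N: "\<bar>prob (A' N) - prob (\<Union>i. a i)\<bar> < \<delta> / 2"
      unfolding LIMSEQ_def dist_real_def by (meson order.refl)
    have subU: "A' N \<subseteq> (\<Union>i. a i)" unfolding A'_def by auto
    have m1: "prob ((\<Union>i. a i) - A' N) < \<delta> / 2"
    proof -
      have "prob ((\<Union>i. a i) - A' N) = prob (\<Union>i. a i) - prob (A' N)"
        using subU A's U by (subst finite_measure_Diff) auto
      then show ?thesis using N by linarith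
    qed
    define \<epsilon> where "\<epsilon> = \<delta> / (2 * real (Suc N))"
    have eps: "\<epsilon> > 0" using d by (simp add: \<epsilon>_def)
    have "\<forall>i. \<exists>kS. prob (sd (a i) (Ls (lab P) (fst kS) -` (snd kS) \<inter> space M)) < \<epsilon>"
      using Union.IH eps by fastforce
    then obtain kS where kS: "\<And>i. prob (sd (a i) (Ls (lab P) (fst (kS i)) -` (snd (kS i)) \<inter> space M)) < \<epsilon>"
      by metis
    define K where "K = (\<Sum>i<N. fst (kS i))"
    have kK: "i < N \<Longrightarrow> fst (kS i) \<le> K" for i unfolding K_def
      by (rule member_le_sum) auto
    define E where "E i = Ls (lab P) (fst (kS i)) -` (snd (kS i)) \<inter> space M" for i
    define S' where "S' = {xs. \<exists>i<N. take (fst (kS i)) xs \<in> snd (kS i)}"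
    have Eeq: "Ls (lab P) K -` S' \<inter> space M = (\<Union>i<N. E i)"
    proof -
      have "E i = Ls (lab P) K -` {xs. take (fst (kS i)) xs \<in> snd (kS i)} \<inter> space M" if "i < N" for i
        unfolding E_def by (rule pre_lift[OF kK[OF that]])
      then show ?thesis unfolding S'_def by auto
    qed
    have Es: "E i \<in> sets M" for i unfolding E_def
      by (rule simple_functionD(2)[OF Ls_simple[OF lab_simple[OF P]]])
    have sdsub: "sd (\<Union>i. a i) (\<Union>i<N. E i) \<subseteq> ((\<Union>i. a i) - A' N) \<union> (\<Union>i<N. sd (a i) (E i))"
      by (auto simp: sd_def A'_def)
    have sds: "sd (a i) (E i) \<in> sets M" for i using as Es by (auto simp: sd_def)
    have "prob (sd (\<Union>i. a i) (\<Union>i<N. E i)) \<le> prob (((\<Union>i. a i) - A' N) \<union> (\<Union>i<N. sd (a i) (E i)))"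
      by (rule finite_measure_mono[OF sdsub]) (use U A's sds in auto)
    also have "\<dots> \<le> prob ((\<Union>i. a i) - A' N) + prob (\<Union>i<N. sd (a i) (E i))"
      by (rule measure_Un_le) (use U A's sds in auto)
    also have "prob (\<Union>i<N. sd (a i) (E i)) \<le> (\<Sum>i<N. prob (sd (a i) (E i)))"
      by (rule measure_UNION_le) (use sds in auto)
    also have "\<dots> \<le> (\<Sum>i<N. \<epsilon>)" using kS by (intro sum_mono) (simp add: E_def less_imp_le)
    also have "\<dots> = real N * \<epsilon>" by simp
    also have "real N * \<epsilon> < \<delta> / 2"
    proof -
      have "real N * \<epsilon> = \<delta> / 2 * (real N / real (Suc N))" by (simp add: \<epsilon>_def field_simps)
      also have "\<dots> < \<delta> / 2 * 1" using d by (intro mult_strict_left_mono) auto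
      finally show ?thesis by simp
    qed
    finally have "prob (sd (\<Union>i. a i) (\<Union>i<N. E i)) < \<delta>" using m1 by linarith
    then show ?thesis using Eeq by metis
  qed
  then show ?case using U by auto
qed

lemma approx_sets:
  assumes P: "finite_partition M P" and gen: "generating M T P" and B: "B \<in> sets M" and d: "\<delta> > 0"
  shows "\<exists>k S. prob (sd B (Ls (lab P) k -` S \<inter> space M)) < \<delta>"
proof -
  obtain A where A: "A \<in> sigma_sets (space M) {(T ^^ n) -` C \<inter> space M | n C. C \<in> P}"
    and AB: "measure M (A - B \<union> (B - A)) = 0"
    using gen B unfolding generating_def by blast
  have As: "A \<in> sets M" and ap: "\<forall>\<delta>>0. \<exists>k S. prob (sd A (Ls (lab P) k -` S \<inter> space M)) < \<delta>"
    using approx_sigma[OF P A] by auto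
  obtain k S where kS: "prob (sd A (Ls (lab P) k -` S \<inter> space M)) < \<delta>" using ap d by blast
  define E where "E = Ls (lab P) k -` S \<inter> space M"
  have Es: "E \<in> sets M" unfolding E_def by (rule simple_functionD(2)[OF Ls_simple[OF lab_simple[OF P]]])
  have "prob (sd B E) \<le> prob (sd A B \<union> sd A E)"
    by (rule finite_measure_mono) (use As B Es in \<open>auto simp: sd_def\<close>)
  also have "\<dots> \<le> prob (sd A B) + prob (sd A E)"
    by (rule measure_Un_le) (use As B Es in \<open>auto simp: sd_def\<close>)
  also have "prob (sd A B) = 0" using AB by (simp add: sd_def)
  finally show ?thesis using kS unfolding E_def by (intro exI[of _ k] exI[of _ S]) simp
qed

end

context mps
begin

lemma cond_approx:
  assumes P: "finite_partition M P" and gen: "generating M T P" and Q: "finite_partition M Q"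
    and eps: "\<epsilon> > 0"
  shows "\<exists>k\<ge>1. ent (\<lambda>w. (lab Q w, Ls (lab P) k w)) - ent (Ls (lab P) k) \<le> \<epsilon>"
proof -
  define c where "c = card Q"
  have finQ: "finite Q" using Q by (simp add: finite_partition_def)
  obtain w0 where w0: "w0 \<in> space M" using not_empty by blast
  obtain B0 where B0: "B0 \<in> Q" "w0 \<in> B0" using part_cover[OF Q w0] .
  have c1: "1 \<le> c" unfolding c_def using B0 finQ by (metis One_nat_def Suc_leI card_gt_0_iff empty_iff)
  define e0 where "e0 = min 1 ((\<epsilon> / (2 * real c ^ 2)) ^ 2)"
  have e0p: "0 < e0" using eps c1 by (simp add: e0_def)
  have e01: "e0 \<le> 1" by (simp add: e0_def)
  define \<delta> where "\<delta> = e0 / real c"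
  have dp0: "0 < \<delta>" using e0p c1 by (simp add: \<delta>_def)
  have "\<forall>B\<in>Q. \<exists>kS. prob (sd B (Ls (lab P) (fst kS) -` (snd kS) \<inter> space M)) < \<delta>"
    using approx_sets[OF P gen part_sets[OF Q] dp0] by fastforce
  then obtain kS where kS: "\<And>B. B \<in> Q \<Longrightarrow> prob (sd B (Ls (lab P) (fst (kS B)) -` (snd (kS B)) \<inter> space M)) < \<delta>"
    by metis
  define K where "K = Suc (\<Sum>B\<in>Q. fst (kS B))"
  have kK: "B \<in> Q \<Longrightarrow> fst (kS B) \<le> K" for B unfolding K_def
    using member_le_sum[of B Q "\<lambda>B. fst (kS B)"] finQ by auto
  define S' where "S' B = {xs. take (fst (kS B)) xs \<in> snd (kS B)}" for B
  define E where "E B = Ls (lab P) K -` S' B \<inter> space M" for B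
  have Eeq: "B \<in> Q \<Longrightarrow> E B = Ls (lab P) (fst (kS B)) -` (snd (kS B)) \<inter> space M" for B
    unfolding E_def S'_def by (rule pre_lift[OF kK, symmetric])
  have sL: "simple_function M (Ls (lab P) K)" by (rule Ls_simple[OF lab_simple[OF P]])
  have Es: "E B \<in> sets M" for B unfolding E_def by (rule simple_functionD(2)[OF sL])
  define \<psi> where "\<psi> xs = (if \<exists>B\<in>Q. xs \<in> S' B then (SOME B. B \<in> Q \<and> xs \<in> S' B) else B0)" for xs
  define r where "r w = \<psi> (Ls (lab P) K w)" for w
  define q where "q = lab Q"
  have sq: "simple_function M q" unfolding q_def by (rule lab_simple[OF Q])
  have sr': "simple_function M (\<lambda>w. \<psi> (Ls (lab P) K w))" using sL by (rule simple_function_compose1)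
  then have sr: "simple_function M r" unfolding r_def .
  have rQ: "r ` space M \<subseteq> Q"
  proof
    fix y assume "y \<in> r ` space M"
    then obtain w where y: "y = \<psi> (Ls (lab P) K w)" by (auto simp: r_def)
    show "y \<in> Q"
    proof (cases "\<exists>B\<in>Q. Ls (lab P) K w \<in> S' B")
      case True
      then have "(SOME B. B \<in> Q \<and> Ls (lab P) K w \<in> S' B) \<in> Q" by (metis (mono_tags, lifting) someI_ex)
      then show ?thesis using True y by (simp add: \<psi>_def)
    qed (use y B0 in \<open>simp add: \<psi>_def\<close>)
  qed
  have qQ: "q ` space M \<subseteq> Q" using lab_props[OF Q] by (auto simp: q_def)
  have bad: "{w\<in>space M. q w \<noteq> r w} \<subseteq> (\<Union>B\<in>Q. sd B (E B))"
  proof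
    fix w assume w: "w \<in> {w\<in>space M. q w \<noteq> r w}"
    then have wsp: "w \<in> space M" and ne: "q w \<noteq> r w" by auto
    have qw: "q w \<in> Q" "w \<in> q w" using lab_props[OF Q wsp] by (auto simp: q_def)
    show "w \<in> (\<Union>B\<in>Q. sd B (E B))"
    proof (cases "\<exists>B\<in>Q. Ls (lab P) K w \<in> S' B")
      case True
      define B' where "B' = (SOME B. B \<in> Q \<and> Ls (lab P) K w \<in> S' B)"
      have B': "B' \<in> Q" "Ls (lab P) K w \<in> S' B'" unfolding B'_def using True
        by (metis (mono_tags, lifting) someI_ex)+
      have rw: "r w = B'" using True by (simp add: r_def \<psi>_def B'_def)
      have "w \<in> E B'" using B' wsp by (simp add: E_def)
      moreover have "w \<notin> B'" using part_disj[OF Q qw(1) B'(1) qw(2)] ne rw by auto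
      ultimately show ?thesis using B'(1) by (auto simp: sd_def)
    next
      case False
      then have "w \<notin> E (q w)" using qw by (auto simp: E_def)
      then show ?thesis using qw by (auto simp: sd_def)
    qed
  qed
  have sds: "sd B (E B) \<in> sets M" if "B \<in> Q" for B using part_sets[OF Q that] Es by (auto simp: sd_def)
  have "prob {w\<in>space M. q w \<noteq> r w} \<le> prob (\<Union>B\<in>Q. sd B (E B))"
    by (rule finite_measure_mono[OF bad]) (use sds finQ in auto)
  also have "\<dots> \<le> (\<Sum>B\<in>Q. prob (sd B (E B)))" by (rule measure_UNION_le[OF finQ sds])
  also have "\<dots> \<le> (\<Sum>B\<in>Q. \<delta>)" using kS Eeq by (intro sum_mono) (simp add: less_imp_le)
  also have "\<dots> = e0" using c1 by (simp add: \<delta>_def c_def)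
  finally have pe: "prob {w\<in>space M. q w \<noteq> r w} \<le> e0" .
  have cqr: "ent (\<lambda>w. (q w, r w)) - ent r \<le> real c ^ 2 * (2 * sqrt e0)"
    unfolding c_def by (rule cent_small[OF sq sr qQ rQ finQ pe e01])
  have "sqrt e0 \<le> sqrt ((\<epsilon> / (2 * real c ^ 2)) ^ 2)" unfolding e0_def by (simp del: real_sqrt_abs)
  also have "\<dots> = \<epsilon> / (2 * real c ^ 2)" using eps c1 by simp
  finally have "real c ^ 2 * (2 * sqrt e0) \<le> real c ^ 2 * (2 * (\<epsilon> / (2 * real c ^ 2)))"
    by (intro mult_left_mono) auto
  also have "\<dots> = \<epsilon>" using c1 by (simp add: field_simps)
  finally have cqr': "ent (\<lambda>w. (q w, r w)) - ent r \<le> \<epsilon>" using cqr by linarith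
  have ss: "ent (\<lambda>w. (q w, Ls (lab P) K w, r w)) + ent r \<le> ent (\<lambda>w. (q w, r w)) + ent (\<lambda>w. (Ls (lab P) K w, r w))"
    by (rule ssa[OF sq sL sr])
  have e1: "ent (\<lambda>w. (q w, Ls (lab P) K w, r w)) = ent (\<lambda>w. (q w, Ls (lab P) K w))"
    by (rule ent_eq[where \<phi>="\<lambda>(a, b). (a, b, \<psi> b)" and \<psi>="\<lambda>(a, b, c). (a, b)"])
       (auto intro!: simple_function_Pair sq sL sr sr' simp del: simple_function_Pair simp: r_def)
  have e2: "ent (\<lambda>w. (Ls (lab P) K w, r w)) = ent (Ls (lab P) K)"
    by (rule ent_eq[where \<phi>="\<lambda>b. (b, \<psi> b)" and \<psi>="\<lambda>(b, c). b"])
       (auto intro!: simple_function_Pair sL sr sr' simp del: simple_function_Pair simp: r_def)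
  have "ent (\<lambda>w. (q w, Ls (lab P) K w)) - ent (Ls (lab P) K) \<le> \<epsilon>"
    using ss e1 e2 cqr' by linarith
  then show ?thesis using q_def by (intro exI[of _ K]) (simp add: K_def)
qed

lemma KS_gen:
  assumes P: "finite_partition M P" and gen: "generating M T P" and Q: "finite_partition M Q"
  shows "hh (lab Q) \<le> hh (lab P)"
proof (rule field_le_epsilon)
  fix \<epsilon> :: real assume eps: "0 < \<epsilon>"
  obtain k where k: "1 \<le> k" and c: "ent (\<lambda>w. (lab Q w, Ls (lab P) k w)) - ent (Ls (lab P) k) \<le> \<epsilon>"
    using cond_approx[OF P gen Q eps] by blast
  have "hh (lab Q) \<le> hh (Ls (lab P) k) + (ent (\<lambda>w. (lab Q w, Ls (lab P) k w)) - ent (Ls (lab P) k))"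
    by (rule hh_bound[OF lab_simple[OF Q] Ls_simple[OF lab_simple[OF P]]])
  also have "hh (Ls (lab P) k) = hh (lab P)" by (rule hh_window[OF lab_simple[OF P] k])
  finally show "hh (lab Q) \<le> hh (lab P) + \<epsilon>" using c by linarith
qed

end

context mps
begin

abbreviation LL :: "'a set set \<Rightarrow> nat \<Rightarrow> 'a set list set" where
  "LL Q n \<equiv> {xs. set xs \<subseteq> Q \<and> length xs = n}"

lemma LL_Suc: "LL Q (Suc n) = (\<lambda>(xs, j). xs @ [j]) ` (LL Q n \<times> Q)"
proof (intro equalityI subsetI)
  fix ys assume ys: "ys \<in> LL Q (Suc n)"
  then have "ys \<noteq> []" by auto
  then have "ys = butlast ys @ [last ys]" by simp
  moreover have "butlast ys \<in> LL Q n" "last ys \<in> Q" using ys \<open>ys \<noteq> []\<close>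
    by (auto dest: in_set_butlastD)
  ultimately show "ys \<in> (\<lambda>(xs, j). xs @ [j]) ` (LL Q n \<times> Q)" by force
qed auto

lemma sum_LL_Suc:
  "(\<Sum>ys\<in>LL Q (Suc n). f ys) = (\<Sum>xs\<in>LL Q n. \<Sum>j\<in>Q. f (xs @ [j]))"
proof -
  have inj: "inj_on (\<lambda>(xs, j). xs @ [j]) (LL Q n \<times> Q)" by (auto simp: inj_on_def)
  have "(\<Sum>ys\<in>(\<lambda>(xs, j). xs @ [j]) ` (LL Q n \<times> Q). f ys) = (\<Sum>p\<in>LL Q n \<times> Q. f ((\<lambda>(xs, j). xs @ [j]) p))"
    by (rule sum.reindex[OF inj, unfolded comp_def])
  also have "\<dots> = (\<Sum>xs\<in>LL Q n. \<Sum>j\<in>Q. f (xs @ [j]))"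
    by (simp add: sum.cartesian_product prod.case_distrib)
  finally show ?thesis unfolding LL_Suc .
qed

lemma Cset_snoc: "Cset (xs @ [j]) = Cset xs \<inter> (T ^^ length xs) -` j"
proof -
  have "Cset (xs @ [j]) = space M \<inter> (\<Inter>k\<in>insert (length xs) {..<length xs}. (T ^^ k) -` ((xs @ [j]) ! k))"
    by (simp add: Cset_def lessThan_Suc)
  also have "\<dots> = space M \<inter> ((T ^^ length xs) -` j \<inter> (\<Inter>k\<in>{..<length xs}. (T ^^ k) -` ((xs @ [j]) ! k)))"
    by simp
  also have "(\<Inter>k\<in>{..<length xs}. (T ^^ k) -` ((xs @ [j]) ! k)) = (\<Inter>k\<in>{..<length xs}. (T ^^ k) -` (xs ! k))"
    by (rule INF_cong) (auto simp: nth_append)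
  finally show ?thesis unfolding Cset_def by blast
qed

lemma psum:
  assumes Q: "finite_partition M Q" and E: "E \<in> sets M"
  shows "(\<Sum>j\<in>Q. prob (E \<inter> (T ^^ n) -` j)) = prob E"
proof -
  have finQ: "finite Q" using Q by (simp add: finite_partition_def)
  have m: "E \<inter> (T ^^ n) -` j \<in> sets M" if "j \<in> Q" for j
  proof -
    have "E \<inter> (T ^^ n) -` j = E \<inter> ((T ^^ n) -` j \<inter> space M)" using sets.sets_into_space[OF E] by auto
    then show ?thesis using measurable_sets[OF Tn_meas part_sets[OF Q that]] E by auto
  qed
  have "E = (\<Union>j\<in>Q. E \<inter> (T ^^ n) -` j)"
  proof (intro equalityI subsetI)
    fix w assume w: "w \<in> E"
    then have "(T ^^ n) w \<in> space M" using sets.sets_into_space[OF E] Tn_space by auto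
    then obtain j where "j \<in> Q" "(T ^^ n) w \<in> j" using part_cover[OF Q] by metis
    then show "w \<in> (\<Union>j\<in>Q. E \<inter> (T ^^ n) -` j)" using w by auto
  qed auto
  also have "prob \<dots> = (\<Sum>j\<in>Q. prob (E \<inter> (T ^^ n) -` j))"
  proof (rule measure_finite_Union[OF finQ])
    show "disjoint_family_on (\<lambda>j. E \<inter> (T ^^ n) -` j) Q"
      unfolding disjoint_family_on_def using part_disj[OF Q] by blast
  qed (use m in auto)
  finally show ?thesis by simp
qed

lemma sum_Cset:
  assumes Q: "finite_partition M Q" and B: "B \<in> sets M"
  shows "(\<Sum>xs\<in>LL Q n. prob (Cset xs \<inter> B)) = prob B"
proof (induction n)
  case 0
  have "LL Q 0 = {[]}" by auto
  then show ?case using sets.sets_into_space[OF B] by (simp add: Cset_def Int_absorb1)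
next
  case (Suc n)
  have "(\<Sum>ys\<in>LL Q (Suc n). prob (Cset ys \<inter> B)) = (\<Sum>xs\<in>LL Q n. \<Sum>j\<in>Q. prob (Cset (xs @ [j]) \<inter> B))"
    by (rule sum_LL_Suc)
  also have "\<dots> = (\<Sum>xs\<in>LL Q n. prob (Cset xs \<inter> B))"
  proof (rule sum.cong[OF refl])
    fix xs assume xs: "xs \<in> LL Q n"
    have "(\<Sum>j\<in>Q. prob (Cset (xs @ [j]) \<inter> B)) = (\<Sum>j\<in>Q. prob ((Cset xs \<inter> B) \<inter> (T ^^ n) -` j))"
      using xs by (intro sum.cong) (auto simp: Cset_snoc Int_ac)
    also have "\<dots> = prob (Cset xs \<inter> B)" using Cset_sets[OF Q] xs B by (intro psum[OF Q]) auto
    finally show "(\<Sum>j\<in>Q. prob (Cset (xs @ [j]) \<inter> B)) = prob (Cset xs \<inter> B)" .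
  qed
  finally show ?case using Suc by simp
qed

end

context mps
begin

definition qq :: "'a set \<Rightarrow> 'a set \<Rightarrow> real" where
  "qq i j = prob (i \<inter> T -` j \<inter> space M) / prob i"

lemma qq_nonneg: "0 \<le> qq i j" by (simp add: qq_def)

lemma Cset_sub_last:
  assumes "xs \<noteq> []" shows "Cset xs \<subseteq> (T ^^ (length xs - 1)) -` last xs \<inter> space M"
proof
  fix w assume w: "w \<in> Cset xs"
  have l: "last xs = xs ! (length xs - 1)" using assms by (simp add: last_conv_nth)
  have "length xs - 1 < length xs" using assms by simp
  moreover have "w \<in> (\<Inter>k<length xs. (T ^^ k) -` (xs ! k))" using w by (simp add: Cset_def)
  ultimately have "(T ^^ (length xs - 1)) w \<in> xs ! (length xs - 1)" by blast
  moreover have "w \<in> space M" using w by (simp add: Cset_def)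
  ultimately show "w \<in> (T ^^ (length xs - 1)) -` last xs \<inter> space M" using l by simp
qed

lemma markov_eq:
  assumes Q: "finite_partition M Q" and mk: "markov_prop M T Q" and n: "1 \<le> n"
    and xs: "xs \<in> LL Q n" and j: "j \<in> Q"
  shows "prob (Cset (xs @ [j])) = prob (Cset xs) * qq (last xs) j"
proof (cases "prob (Cset xs) = 0")
  case True
  have "prob (Cset (xs @ [j])) \<le> prob (Cset xs)"
    using Cset_sets[OF Q] xs by (intro finite_measure_mono) (auto simp: Cset_snoc)
  then show ?thesis using True measure_nonneg[of M "Cset (xs @ [j])"] by simp
next
  case False
  then have pos: "prob (Cset xs) > 0" using measure_nonneg[of M "Cset xs"] by linarith
  define a where "a k = (xs @ [j]) ! k" for k
  have ak: "\<forall>k\<le>n. a k \<in> Q" using xs j by (auto simp: a_def nth_append)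
  have c1: "space M \<inter> (\<Inter>k<n. (T ^^ k) -` (a k)) = Cset xs"
    using xs by (auto simp: Cset_def a_def nth_append)
  have c2: "space M \<inter> (\<Inter>k\<le>n. (T ^^ k) -` (a k)) = Cset (xs @ [j])"
    using xs unfolding Cset_def a_def by (auto simp: less_Suc_eq_le)
  have an1: "a (n - 1) = last xs"
  proof -
    have "n - 1 < length xs" "xs \<noteq> []" using xs n by auto
    then show ?thesis using xs by (simp add: a_def nth_append last_conv_nth)
  qed
  have an: "a n = j"
  proof -
    have "n = length xs" using xs by simp
    then show ?thesis by (simp add: a_def)
  qed
  have H: "\<And>n a. 1 \<le> n \<Longrightarrow> (\<forall>k\<le>n. a k \<in> Q) \<Longrightarrow>
        measure M (space M \<inter> (\<Inter>k<n. (T ^^ k) -` (a k))) > 0 \<Longrightarrow>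
        measure M (space M \<inter> (\<Inter>k\<le>n. (T ^^ k) -` (a k)))
          / measure M (space M \<inter> (\<Inter>k<n. (T ^^ k) -` (a k)))
        = measure M (a (n - 1) \<inter> T -` (a n) \<inter> space M) / measure M (a (n - 1))"
    using mk unfolding markov_prop_def by blast
  have "prob (Cset (xs @ [j])) / prob (Cset xs) = qq (last xs) j"
    using H[OF n ak] pos unfolding c1 c2 an1 an qq_def by simp
  then show ?thesis using pos by (simp add: field_simps)
qed

lemma eta_mult: "0 \<le> x \<Longrightarrow> 0 \<le> y \<Longrightarrow> eta (x * y) = y * eta x + x * eta y"
  by (cases "x = 0 \<or> y = 0") (auto simp: eta_def ln_mult algebra_simps)

lemma sum_qq:
  assumes Q: "finite_partition M Q" and i: "i \<in> Q" and pos: "prob i \<noteq> 0"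
  shows "(\<Sum>j\<in>Q. qq i j) = 1"
proof -
  have eqj: "i \<inter> T -` j \<inter> space M = i \<inter> (T ^^ 1) -` j" for j using part_sub[OF Q i] by auto
  then have "(\<Sum>j\<in>Q. prob (i \<inter> T -` j \<inter> space M)) = (\<Sum>j\<in>Q. prob (i \<inter> (T ^^ 1) -` j))"
    by (simp only: eqj)
  also have "\<dots> = prob i" by (rule psum[OF Q part_sets[OF Q i]])
  finally show ?thesis using pos by (simp add: qq_def sum_divide_distrib[symmetric])
qed

definition psi :: "'a set set \<Rightarrow> 'a set \<Rightarrow> real" where "psi Q i = (\<Sum>j\<in>Q. eta (qq i j))"

lemma markov_step:
  assumes Q: "finite_partition M Q" and mk: "markov_prop M T Q" and n: "1 \<le> n"
  shows "part_entropy M (refine M T Q (Suc n)) = part_entropy M (refine M T Q n) - (\<Sum>i\<in>Q. prob i * psi Q i)"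
proof -
  have finQ: "finite Q" using Q by (simp add: finite_partition_def)
  have finL: "finite (LL Q n)" using finQ by (rule finite_lists_length_eq)
  have step1: "(\<Sum>ys\<in>LL Q (Suc n). eta (prob (Cset ys)))
      = (\<Sum>xs\<in>LL Q n. eta (prob (Cset xs)) + prob (Cset xs) * psi Q (last xs))"
  proof -
    have "(\<Sum>ys\<in>LL Q (Suc n). eta (prob (Cset ys))) = (\<Sum>xs\<in>LL Q n. \<Sum>j\<in>Q. eta (prob (Cset (xs @ [j]))))"
      by (rule sum_LL_Suc)
    also have "\<dots> = (\<Sum>xs\<in>LL Q n. eta (prob (Cset xs)) + prob (Cset xs) * psi Q (last xs))"
    proof (rule sum.cong[OF refl])
      fix xs assume xs: "xs \<in> LL Q n"
      have ne: "xs \<noteq> []" using xs n by auto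
      have lastQ: "last xs \<in> Q" using xs ne last_in_set by auto
      have "(\<Sum>j\<in>Q. eta (prob (Cset (xs @ [j])))) = (\<Sum>j\<in>Q. eta (prob (Cset xs) * qq (last xs) j))"
        using markov_eq[OF Q mk n xs] by simp
      also have "\<dots> = (\<Sum>j\<in>Q. qq (last xs) j * eta (prob (Cset xs)) + prob (Cset xs) * eta (qq (last xs) j))"
        by (intro sum.cong refl eta_mult qq_nonneg measure_nonneg)
      also have "\<dots> = eta (prob (Cset xs)) * (\<Sum>j\<in>Q. qq (last xs) j) + prob (Cset xs) * psi Q (last xs)"
        by (simp add: sum.distrib sum_distrib_left sum_distrib_right psi_def mult.commute)
      also have "eta (prob (Cset xs)) * (\<Sum>j\<in>Q. qq (last xs) j) = eta (prob (Cset xs))"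
      proof (cases "prob (last xs) = 0")
        case True
        have "prob (Cset xs) \<le> prob ((T ^^ (length xs - 1)) -` last xs \<inter> space M)"
          by (rule finite_measure_mono[OF Cset_sub_last[OF ne]])
             (rule measurable_sets[OF Tn_meas part_sets[OF Q lastQ]])
        also have "\<dots> = 0" using True Tn_pres[OF part_sets[OF Q lastQ]] by simp
        finally have "prob (Cset xs) = 0" using measure_nonneg[of M "Cset xs"] by linarith
        then show ?thesis by simp
      next
        case False
        then show ?thesis using sum_qq[OF Q lastQ] by simp
      qed
      finally show "(\<Sum>j\<in>Q. eta (prob (Cset (xs @ [j])))) = eta (prob (Cset xs)) + prob (Cset xs) * psi Q (last xs)" .
    qed
    finally show ?thesis .
  qed
  have step2: "(\<Sum>xs\<in>LL Q n. prob (Cset xs) * psi Q (last xs)) = (\<Sum>i\<in>Q. prob i * psi Q i)"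
  proof -
    define B where "B i = (T ^^ (n - 1)) -` i \<inter> space M" for i
    have Bs: "i \<in> Q \<Longrightarrow> B i \<in> sets M" for i unfolding B_def by (rule measurable_sets[OF Tn_meas part_sets[OF Q]])
    have "(\<Sum>xs\<in>LL Q n. prob (Cset xs) * psi Q (last xs)) = (\<Sum>xs\<in>LL Q n. \<Sum>i\<in>Q. prob (Cset xs \<inter> B i) * psi Q i)"
    proof (rule sum.cong[OF refl])
      fix xs assume xs: "xs \<in> LL Q n"
      have ne: "xs \<noteq> []" using xs n by auto
      have lastQ: "last xs \<in> Q" using xs ne last_in_set by auto
      have sub: "Cset xs \<subseteq> B (last xs)" using Cset_sub_last[OF ne] xs by (simp add: B_def)
      have "(\<Sum>i\<in>Q. prob (Cset xs \<inter> B i) * psi Q i) = prob (Cset xs \<inter> B (last xs)) * psi Q (last xs)"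
      proof (rule sum.remove[OF finQ lastQ, THEN trans], simp, rule sum.neutral, intro ballI)
        fix i assume i: "i \<in> Q - {last xs}"
        have "Cset xs \<inter> B i = {}"
        proof -
          have "B (last xs) \<inter> B i = {}" using part_disj[OF Q lastQ, of i] i by (auto simp: B_def)
          then show ?thesis using sub by blast
        qed
        then show "prob (Cset xs \<inter> B i) * psi Q i = 0" by simp
      qed
      also have "\<dots> = prob (Cset xs) * psi Q (last xs)" using sub by (simp add: Int_absorb2)
      finally show "prob (Cset xs) * psi Q (last xs) = (\<Sum>i\<in>Q. prob (Cset xs \<inter> B i) * psi Q i)" by simp
    qed
    also have "\<dots> = (\<Sum>i\<in>Q. (\<Sum>xs\<in>LL Q n. prob (Cset xs \<inter> B i)) * psi Q i)"
      by (subst sum.swap) (simp add: sum_distrib_right)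
    also have "\<dots> = (\<Sum>i\<in>Q. prob (B i) * psi Q i)" using sum_Cset[OF Q Bs] by simp
    also have "\<dots> = (\<Sum>i\<in>Q. prob i * psi Q i)" using Tn_pres[OF part_sets[OF Q]] by (simp add: B_def)
    finally show ?thesis .
  qed
  show ?thesis using step1 step2 unfolding part_entropy_sum[OF Q] by (simp add: sum.distrib)
qed


lemma refine_1:
  assumes Q: "finite_partition M Q"
  shows "refine M T Q 1 = Q"
proof -
  have l1: "{..<1::nat} = {0}" by auto
  have e: "(\<Inter>k\<in>{..<1::nat}. (T ^^ k) -` a k) = a 0" for a :: "nat \<Rightarrow> 'a set"
  proof -
    have l2: "{..<Suc 0} = {0}" by auto
    show ?thesis by (simp add: l1 l2)
  qed
  have e2: "(\<forall>k<1::nat. a k \<in> Q) \<longleftrightarrow> a 0 \<in> Q" for a :: "nat \<Rightarrow> 'a set" by simp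
  have "refine M T Q 1 = {space M \<inter> a (0::nat) | a. a 0 \<in> Q}"
    unfolding refine_def e e2 by (rule refl)
  also have "\<dots> = Q"
  proof (intro equalityI subsetI)
    fix A assume "A \<in> {space M \<inter> a (0::nat) | a. a 0 \<in> Q}"
    then have "\<exists>a::nat \<Rightarrow> 'a set. A = space M \<inter> a 0 \<and> a 0 \<in> Q" by (simp only: mem_Collect_eq)
    then obtain a :: "nat \<Rightarrow> 'a set" where a: "A = space M \<inter> a 0" "a 0 \<in> Q" by (elim exE conjE)
    then show "A \<in> Q" using part_sub[OF Q a(2)] by (simp add: Int_absorb1)
  next
    fix A assume A: "A \<in> Q"
    show "A \<in> {space M \<inter> a (0::nat) | a. a 0 \<in> Q}" unfolding mem_Collect_eq
      by (rule exI[of _ "\<lambda>_. A"]) (use part_sub[OF Q A] A in auto)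
  qed
  finally show ?thesis .
qed

lemma markov_KS:
  assumes Q: "finite_partition M Q" and mk: "markov_prop M T Q"
  shows "part_KS M T Q = part_entropy M (refine M T Q 2) - part_entropy M Q"
proof -
  define c where "c = - (\<Sum>i\<in>Q. prob i * psi Q i)"
  have eq: "part_entropy M (refine M T Q (Suc n)) - part_entropy M (refine M T Q n) = c" if "1 \<le> n" for n
    using markov_step[OF Q mk that] by (simp add: c_def)
  have "(\<lambda>n. part_entropy M (refine M T Q (Suc n)) - part_entropy M (refine M T Q n)) \<longlonglongrightarrow> c"
    by (rule tendsto_eventually) (use eq in \<open>auto simp: eventually_sequentially\<close>)
  then have "part_KS M T Q = c" unfolding part_KS_def by (rule limI)
  moreover have "c = part_entropy M (refine M T Q 2) - part_entropy M Q"
    using eq[of 1] refine_1[OF Q] by (simp add: numeral_2_eq_2)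
  ultimately show ?thesis by simp
qed

end

definition pkey :: "(nat \<Rightarrow> real) \<Rightarrow> nat \<Rightarrow> real list" where
  "pkey x j = [- x j, - real j]"

lemma pkey_inj: "inj (pkey x)" by (auto simp: inj_on_def pkey_def)

lemma pkey_less: "pkey x a < pkey x b \<longleftrightarrow> x a > x b \<or> (x a = x b \<and> a > b)"
  by (auto simp: pkey_def list_less_def)

lemma has_pattern_sorted:
  assumes h: "has_pattern x d r"
  shows "sorted (map (pkey x) r)" "length r = Suc d" "distinct r" "set r = {0..d}"
proof -
  show dr: "distinct r" and sr: "set r = {0..d}" using h by (auto simp: has_pattern_def ord_patterns_def)
  show lr: "length r = Suc d" using distinct_card[OF dr] sr by simp
  show "sorted (map (pkey x) r)"
    unfolding sorted_iff_nth_Suc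
  proof (intro allI impI)
    fix i assume i: "Suc i < length (map (pkey x) r)"
    then have l: "Suc i \<in> {1..d}" using lr by auto
    have "x (r ! (Suc i - 1)) \<ge> x (r ! Suc i) \<and> (x (r ! (Suc i - 1)) = x (r ! Suc i) \<longrightarrow> r ! (Suc i - 1) > r ! Suc i)"
      using h l unfolding has_pattern_def by blast
    then have "pkey x (r ! i) < pkey x (r ! Suc i)" unfolding pkey_less by auto
    then show "map (pkey x) r ! i \<le> map (pkey x) r ! Suc i" using i by simp
  qed
qed

lemma has_pattern_unique:
  assumes "has_pattern x d r" "has_pattern x d r'"
  shows "r = r'"
proof -
  note a = has_pattern_sorted[OF assms(1)] and b = has_pattern_sorted[OF assms(2)]
  have "map (pkey x) r = map (pkey x) r'"
  proof (rule sorted_distinct_set_unique)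
    show "distinct (map (pkey x) r)" "distinct (map (pkey x) r')"
      using a b pkey_inj by (auto simp: distinct_map inj_on_def)
  qed (use a b in auto)
  then show ?thesis using pkey_inj by simp
qed

lemma has_pattern_exists: "\<exists>r. has_pattern x d r"
proof -
  define r where "r = sort_key (pkey x) [0..<Suc d]"
  have dr: "distinct r" and sr: "set r = {0..d}" by (auto simp: r_def)
  have lr: "length r = Suc d" by (simp add: r_def length_sort)
  have so: "sorted (map (pkey x) r)" by (simp add: r_def)
  have "x (r ! (l - 1)) \<ge> x (r ! l) \<and> (x (r ! (l - 1)) = x (r ! l) \<longrightarrow> r ! (l - 1) > r ! l)"
    if l: "l \<in> {1..d}" for l
  proof -
    have le: "pkey x (r ! (l - 1)) \<le> pkey x (r ! l)"
      using sorted_nth_mono[OF so, of "l - 1" l] l lr by auto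
    have "r ! (l - 1) \<noteq> r ! l" using dr l lr by (auto simp: nth_eq_iff_index_eq)
    then have "pkey x (r ! (l - 1)) \<noteq> pkey x (r ! l)" using pkey_inj by (auto simp: inj_on_def)
    then have "pkey x (r ! (l - 1)) < pkey x (r ! l)" using le by simp
    then show ?thesis unfolding pkey_less by auto
  qed
  then have "has_pattern x d r" using dr sr by (auto simp: has_pattern_def ord_patterns_def)
  then show ?thesis by blast
qed

lemma finite_ord_patterns: "finite (ord_patterns d)"
proof -
  have "ord_patterns d \<subseteq> {r. set r \<subseteq> {0..d} \<and> length r = Suc d}"
    by (auto simp: ord_patterns_def distinct_card[symmetric])
  then show ?thesis by (rule finite_subset) (rule finite_lists_length_eq, simp)
qed

context mps
begin

lemma ordinal_partition_fp:
  fixes X :: "'a \<Rightarrow> real ^ 'n"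
  assumes X: "X \<in> borel_measurable M"
  shows "finite_partition M (ordinal_partition M T X d)"
proof -
  define S where "S \<pi> = {w \<in> space M. \<forall>i. has_pattern (\<lambda>j. X ((T ^^ (d - j)) w) $ i) d (\<pi> i)}"
    for \<pi> :: "'n \<Rightarrow> nat list"
  define PP where "PP = {\<pi> :: 'n \<Rightarrow> nat list. \<forall>i. \<pi> i \<in> ord_patterns d}"
  have OP: "ordinal_partition M T X d = S ` PP" unfolding ordinal_partition_def S_def PP_def by auto
  have finPi: "finite PP"
  proof -
    have "PP = Pi\<^sub>E UNIV (\<lambda>_. ord_patterns d)" by (auto simp: PP_def PiE_UNIV_domain)
    then show ?thesis by (simp add: finite_PiE finite_ord_patterns)
  qed
  have gm: "(\<lambda>w. X ((T ^^ k) w) $ i) \<in> borel_measurable M" for k i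
  proof -
    have c: "(\<lambda>x::real^'n. x $ i) \<in> borel_measurable borel"
      by (intro borel_measurable_continuous_onI continuous_on_component continuous_on_id)
    have "(\<lambda>w. X ((T ^^ k) w)) \<in> borel_measurable M" using measurable_comp[OF Tn_meas X] by (simp add: comp_def)
    from measurable_comp[OF this c] show ?thesis by (simp add: comp_def)
  qed
  have Ss: "S \<pi> \<in> sets M" if "\<pi> \<in> PP" for \<pi>
  proof -
    have "S \<pi> = {w \<in> space M. \<forall>i. \<forall>l\<in>{1..d}. X ((T ^^ (d - \<pi> i ! (l - 1))) w) $ i \<ge> X ((T ^^ (d - \<pi> i ! l)) w) $ i \<and>
         (X ((T ^^ (d - \<pi> i ! (l - 1))) w) $ i = X ((T ^^ (d - \<pi> i ! l)) w) $ i \<longrightarrow> \<pi> i ! (l - 1) > \<pi> i ! l)}"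
      using that by (auto simp: S_def PP_def has_pattern_def)
    also have "\<dots> \<in> sets M" using gm by measurable
    finally show ?thesis .
  qed
  show ?thesis unfolding finite_partition_def OP
  proof (intro conjI)
    show "finite (S ` PP)" using finPi by simp
    show "S ` PP \<subseteq> sets M" using Ss by auto
    show "\<Union> (S ` PP) = space M"
    proof (intro equalityI subsetI)
      fix w assume w: "w \<in> space M"
      have "\<forall>i. \<exists>r. has_pattern (\<lambda>j. X ((T ^^ (d - j)) w) $ i) d r" using has_pattern_exists by blast
      then obtain \<pi> where \<pi>: "\<And>i. has_pattern (\<lambda>j. X ((T ^^ (d - j)) w) $ i) d (\<pi> i)" by metis
      then have "\<pi> \<in> PP" by (auto simp: PP_def has_pattern_def)
      moreover have "w \<in> S \<pi>" using w \<pi> by (simp add: S_def)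
      ultimately show "w \<in> \<Union> (S ` PP)" by blast
    qed (auto simp: S_def)
    show "\<forall>A\<in>S ` PP. \<forall>B\<in>S ` PP. A \<noteq> B \<longrightarrow> A \<inter> B = {}"
    proof (intro ballI impI)
      fix A B assume A: "A \<in> S ` PP" and B: "B \<in> S ` PP" and ne: "A \<noteq> B"
      obtain \<pi> \<pi>' where A': "A = S \<pi>" and B': "B = S \<pi>'" using A B by auto
      show "A \<inter> B = {}"
      proof (rule ccontr)
        assume "A \<inter> B \<noteq> {}"
        then obtain w where w: "w \<in> S \<pi>" "w \<in> S \<pi>'" using A' B' by auto
        have "\<pi> i = \<pi>' i" for i
          by (rule has_pattern_unique[of "\<lambda>j. X ((T ^^ (d - j)) w) $ i" d]) (use w in \<open>auto simp: S_def\<close>)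
        then have "\<pi> = \<pi>'" by auto
        then show False using ne A' B' by simp
      qed
    qed
  qed
qed

end

theorem lemma1:
  fixes M :: "'a::topological_space measure" and T :: "'a \<Rightarrow> 'a"
    and X :: "'a \<Rightarrow> real ^ 'n"
  assumes "mpds M T"
    and "X \<in> borel_measurable M"
    and "(\<lambda>d. ereal (part_KS M T (ordinal_partition M T X d))) \<longlonglongrightarrow> KS_entropy M T"
  shows "((\<exists>d0\<ge>1. \<forall>d\<ge>d0. markov_prop M T (ordinal_partition M T X d)) \<longrightarrow>
            (\<lambda>d. ereal (cond_entropy_ord M T X d)) \<longlonglongrightarrow> KS_entropy M T)
       \<and> (\<forall>d\<ge>1. generating M T (ordinal_partition M T X d) \<and> markov_prop M T (ordinal_partition M T X d)
            \<longrightarrow> KS_entropy M T = ereal (cond_entropy_ord M T X d))"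
proof -
  have ps: "prob_space M" and Tm: "T \<in> measurable M M"
    and Tp: "\<forall>B \<in> sets M. measure M (T -` B \<inter> space M) = measure M B"
    using assms(1) unfolding mpds_def by blast+
  interpret mps M T
    by (rule mps.intro[OF ps mps_axioms.intro[OF Tm]]) (use Tp in blast)
  have fp: "\<And>d. finite_partition M (ordinal_partition M T X d)"
    by (rule ordinal_partition_fp[OF assms(2)])
  have ce: "\<And>d. markov_prop M T (ordinal_partition M T X d) \<Longrightarrow>
      part_KS M T (ordinal_partition M T X d) = cond_entropy_ord M T X d"
    unfolding cond_entropy_ord_def using markov_KS[OF fp] by simp
  show ?thesis
  proof (intro conjI impI allI)
    assume "\<exists>d0\<ge>1. \<forall>d\<ge>d0. markov_prop M T (ordinal_partition M T X d)"
    then obtain d0 where d0: "\<forall>d\<ge>d0. markov_prop M T (ordinal_partition M T X d)" by blast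
    have ev: "eventually (\<lambda>d. ereal (part_KS M T (ordinal_partition M T X d)) = ereal (cond_entropy_ord M T X d)) sequentially"
      unfolding eventually_sequentially using d0 ce by auto
    show "(\<lambda>d. ereal (cond_entropy_ord M T X d)) \<longlonglongrightarrow> KS_entropy M T"
      using assms(3) tendsto_cong[OF ev] by simp
  next
    fix d :: nat
    assume "1 \<le> d" and "generating M T (ordinal_partition M T X d) \<and> markov_prop M T (ordinal_partition M T X d)"
    then have gen: "generating M T (ordinal_partition M T X d)"
      and mk: "markov_prop M T (ordinal_partition M T X d)" by auto
    let ?P = "ordinal_partition M T X d"
    have "KS_entropy M T = ereal (part_KS M T ?P)"
      unfolding KS_entropy_def
    proof (rule antisym)
      show "(SUP Q\<in>{Q. finite_partition M Q}. ereal (part_KS M T Q)) \<le> ereal (part_KS M T ?P)"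
      proof (rule SUP_least)
        fix Q assume "Q \<in> {Q. finite_partition M Q}"
        then have Q: "finite_partition M Q" by simp
        have "hh (lab Q) \<le> hh (lab ?P)" by (rule KS_gen[OF fp gen Q])
        then show "ereal (part_KS M T Q) \<le> ereal (part_KS M T ?P)"
          by (simp add: part_KS_hh[OF Q] part_KS_hh[OF fp])
      qed
      show "ereal (part_KS M T ?P) \<le> (SUP Q\<in>{Q. finite_partition M Q}. ereal (part_KS M T Q))"
        by (rule SUP_upper) (simp add: fp)
    qed
    then show "KS_entropy M T = ereal (cond_entropy_ord M T X d)" using ce[OF mk] by simp
  qed
qed


end
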